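(* Let $k$ be a field of characteristic $p>2$ ($p$ prime). For each $m\ge1$, $w_m\notin S^2+T(G_0)$.
   Context: $X=\{x_i\mid i\ge0\}$ is countably infinite; $k_0\langle X\rangle$ is the free nonunitary associative $k$-algebra on $X$. $[a,b]=ab-ba$. $S^2$ is the $T$-space of $k_0\langle X\rangle$ (smallest subspace containing it and invariant under all endomorphisms) generated by $[x_1,x_2]$. $\kappa(u,v)=[u,v]u^{p-1}v^{p-1}$ and $w_m=\prod_{r=1}^m\kappa(x_{2r-1},x_{2r})$. $G_0$ is the infinite-dimensional nonunitary Grassmann algebra over $k$ (basis the products $e_{i_1}\cdots e_{i_n}$, $n\ge1$, $i_1<\dots<i_n$, with $e_ie_j=-e_je_i$, $e_i^2=0$), and $T(G_0)$ is the set of $f\in k_0\langle X\rangle$ in the kernel of every homomorphism $k_0\langle X\rangle\to G_0$. *)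

theory Defs
  imports Main "HOL-Computational_Algebra.Primes"
begin

text \<open>An element is a finitely supported coefficient function on words over nat
  (word [i1,...,in] stands for the monomial x_i1 ... x_in), vanishing on the empty word
  (nonunitary).\<close>

type_synonym 'k fa = "nat list \<Rightarrow> 'k"

definition FA :: "'k::field fa set" where
  "FA = {f. finite {w. f w \<noteq> 0} \<and> f [] = 0}"

definition fa_var :: "nat \<Rightarrow> 'k::field fa" where
  "fa_var i = (\<lambda>w. if w = [i] then 1 else 0)"

definition fa_add :: "'k::field fa \<Rightarrow> 'k fa \<Rightarrow> 'k fa" where
  "fa_add f g = (\<lambda>w. f w + g w)"

definition fa_smult :: "'k::field \<Rightarrow> 'k fa \<Rightarrow> 'k fa" where
  "fa_smult c f = (\<lambda>w. c * f w)"

definition fa_mult :: "'k::field fa \<Rightarrow> 'k fa \<Rightarrow> 'k fa" where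
  "fa_mult f g = (\<lambda>w. \<Sum>n\<in>{..length w}. f (take n w) * g (drop n w))"

definition fa_comm :: "'k::field fa \<Rightarrow> 'k fa \<Rightarrow> 'k fa" where
  "fa_comm f g = fa_add (fa_mult f g) (fa_smult (-1) (fa_mult g f))"

text \<open>Positive powers: fa_pow f n = f^n for n >= 1 (junk value 0 at n = 0).\<close>
fun fa_pow :: "'k::field fa \<Rightarrow> nat \<Rightarrow> 'k fa" where
  "fa_pow f 0 = (\<lambda>_. 0)"
| "fa_pow f (Suc 0) = f"
| "fa_pow f (Suc (Suc n)) = fa_mult f (fa_pow f (Suc n))"

definition kappa :: "nat \<Rightarrow> 'k::field fa \<Rightarrow> 'k fa \<Rightarrow> 'k fa" where
  "kappa p u v = fa_mult (fa_mult (fa_comm u v) (fa_pow u (p - 1))) (fa_pow v (p - 1))"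

text \<open>w_m = prod_{r=1}^m kappa(x_{2r-1}, x_{2r}) (junk value 0 at m = 0).\<close>
fun w_elt :: "nat \<Rightarrow> nat \<Rightarrow> 'k::field fa" where
  "w_elt p 0 = (\<lambda>_. 0)"
| "w_elt p (Suc 0) = kappa p (fa_var 1) (fa_var 2)"
| "w_elt p (Suc (Suc m)) =
     fa_mult (w_elt p (Suc m)) (kappa p (fa_var (2 * Suc (Suc m) - 1)) (fa_var (2 * Suc (Suc m))))"

definition fa_subspace :: "'k::field fa set \<Rightarrow> bool" where
  "fa_subspace V \<longleftrightarrow> V \<subseteq> FA \<and> (\<lambda>_. 0) \<in> V \<and>
     (\<forall>f\<in>V. \<forall>g\<in>V. fa_add f g \<in> V) \<and> (\<forall>c. \<forall>f\<in>V. fa_smult c f \<in> V)"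

definition fa_endo :: "('k::field fa \<Rightarrow> 'k fa) \<Rightarrow> bool" where
  "fa_endo \<phi> \<longleftrightarrow> (\<forall>f\<in>FA. \<phi> f \<in> FA) \<and>
     (\<forall>f\<in>FA. \<forall>g\<in>FA. \<phi> (fa_add f g) = fa_add (\<phi> f) (\<phi> g)) \<and>
     (\<forall>c. \<forall>f\<in>FA. \<phi> (fa_smult c f) = fa_smult c (\<phi> f)) \<and>
     (\<forall>f\<in>FA. \<forall>g\<in>FA. \<phi> (fa_mult f g) = fa_mult (\<phi> f) (\<phi> g))"

definition S2 :: "'k::field fa set" where
  "S2 = \<Inter>{V. fa_subspace V \<and> fa_comm (fa_var 1) (fa_var 2) \<in> V \<and>
              (\<forall>\<phi>. fa_endo \<phi> \<longrightarrow> \<phi> ` V \<subseteq> V)}"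

text \<open>An element is a finitely supported coefficient function on finite nonempty sets
  {i1 < ... < in} of indices (standing for e_i1 ... e_in).\<close>

type_synonym 'k gr = "nat set \<Rightarrow> 'k"

definition G0 :: "'k::field gr set" where
  "G0 = {a. finite {A. a A \<noteq> 0} \<and> (\<forall>A. a A \<noteq> 0 \<longrightarrow> finite A \<and> A \<noteq> {})}"

definition gr_add :: "'k::field gr \<Rightarrow> 'k gr \<Rightarrow> 'k gr" where
  "gr_add a b = (\<lambda>A. a A + b A)"

definition gr_smult :: "'k::field \<Rightarrow> 'k gr \<Rightarrow> 'k gr" where
  "gr_smult c a = (\<lambda>A. c * a A)"

text \<open>Sign of e_A e_B = sign * e_{A union B} for disjoint A, B: number of inversions.\<close>
definition gr_sign :: "nat set \<Rightarrow> nat set \<Rightarrow> 'k::field" where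
  "gr_sign A B = (-1) ^ card {(i, j). i \<in> A \<and> j \<in> B \<and> j < i}"

definition gr_mult :: "'k::field gr \<Rightarrow> 'k gr \<Rightarrow> 'k gr" where
  "gr_mult a b = (\<lambda>C. if finite C then
      (\<Sum>A\<in>{A. A \<subseteq> C \<and> A \<noteq> {} \<and> A \<noteq> C}. gr_sign A (C - A) * a A * b (C - A))
    else 0)"

definition fa_gr_hom :: "('k::field fa \<Rightarrow> 'k gr) \<Rightarrow> bool" where
  "fa_gr_hom \<phi> \<longleftrightarrow> (\<forall>f\<in>FA. \<phi> f \<in> G0) \<and>
     (\<forall>f\<in>FA. \<forall>g\<in>FA. \<phi> (fa_add f g) = gr_add (\<phi> f) (\<phi> g)) \<and>
     (\<forall>c. \<forall>f\<in>FA. \<phi> (fa_smult c f) = gr_smult c (\<phi> f)) \<and>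
     (\<forall>f\<in>FA. \<forall>g\<in>FA. \<phi> (fa_mult f g) = gr_mult (\<phi> f) (\<phi> g))"

definition TG0 :: "'k::field fa set" where
  "TG0 = {f\<in>FA. \<forall>\<phi>. fa_gr_hom \<phi> \<longrightarrow> \<phi> f = (\<lambda>_. 0)}"

definition S2_plus_TG0 :: "'k::field fa set" where
  "S2_plus_TG0 = {fa_add a b | a b. a \<in> S2 \<and> b \<in> TG0}"

end

theory Submission
  imports Defs "HOL-Library.Function_Algebras"
begin

definition inv_set :: "nat set \<Rightarrow> nat set \<Rightarrow> (nat \<times> nat) set" where
  "inv_set A B = {(i,j). i \<in> A \<and> j \<in> B \<and> j < i}"

lemma gr_sign_inv: "gr_sign A B = (-1) ^ card (inv_set A B)"
  by (simp add: gr_sign_def inv_set_def)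

lemma finite_inv_set: "finite A \<Longrightarrow> finite B \<Longrightarrow> finite (inv_set A B)"
  by (rule finite_subset[of _ "A \<times> B"]) (auto simp: inv_set_def)

lemma sign_union_left:
  assumes "finite A" "finite B" "finite C" "A \<inter> B = {}"
  shows "gr_sign (A \<union> B) C = (gr_sign A C * gr_sign B C :: 'k::field)"
proof -
  have "inv_set (A \<union> B) C = inv_set A C \<union> inv_set B C"
    by (auto simp: inv_set_def)
  moreover have "inv_set A C \<inter> inv_set B C = {}" using assms(4) by (auto simp: inv_set_def)
  ultimately have "card (inv_set (A \<union> B) C) = card (inv_set A C) + card (inv_set B C)"
    using assms by (simp add: card_Un_disjoint finite_inv_set)
  thus ?thesis by (simp add: gr_sign_inv power_add)
qed

lemma sign_union_right:
  assumes "finite A" "finite B" "finite C" "B \<inter> C = {}"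
  shows "gr_sign A (B \<union> C) = (gr_sign A B * gr_sign A C :: 'k::field)"
proof -
  have "inv_set A (B \<union> C) = inv_set A B \<union> inv_set A C"
    by (auto simp: inv_set_def)
  moreover have "inv_set A B \<inter> inv_set A C = {}" using assms(4) by (auto simp: inv_set_def)
  ultimately have "card (inv_set A (B \<union> C)) = card (inv_set A B) + card (inv_set A C)"
    using assms by (simp add: card_Un_disjoint finite_inv_set)
  thus ?thesis by (simp add: gr_sign_inv power_add)
qed

lemma sign_sq: "gr_sign A B * gr_sign A B = (1::'k::field)"
  by (simp add: gr_sign_inv flip: power_add)

lemma sign_swap:
  assumes "finite A" "finite B" "A \<inter> B = {}"
  shows "gr_sign B A = (-1) ^ (card A * card B) * (gr_sign A B :: 'k::field)"
proof -
  have "A \<times> B = inv_set A B \<union> (prod.swap ` inv_set B A)"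
    using assms(3) by (auto simp: inv_set_def image_iff)
  moreover have "inv_set A B \<inter> (prod.swap ` inv_set B A) = {}"
    by (auto simp: inv_set_def)
  ultimately have "card A * card B = card (inv_set A B) + card (inv_set B A)"
    using assms by (simp add: card_Un_disjoint finite_inv_set card_image card_cartesian_product
        flip: card_cartesian_product)
  hence "(-1::'k) ^ (card A * card B) * gr_sign A B
        = gr_sign B A * (gr_sign A B * gr_sign A B)"
    by (simp add: gr_sign_inv power_add)
  thus ?thesis by (simp add: sign_sq)
qed

definition xm :: "'k::field gr \<Rightarrow> 'k gr \<Rightarrow> 'k gr" where
  "xm a b = (\<lambda>C. \<Sum>A\<in>Pow C. gr_sign A (C - A) * a A * b (C - A))"

lemma xm_infinite: "infinite C \<Longrightarrow> xm a b C = 0"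
  by (simp add: xm_def)

lemma xm_assoc_aux1:
  assumes fin: "finite C" and A: "A \<subseteq> C" and B: "B \<subseteq> A"
  shows "gr_sign A (C - A) * (gr_sign B (A - B) * a B * b (A - B)) * c (C - A) =
    gr_sign B (A - B) * gr_sign B (C - (B \<union> (A - B))) * gr_sign (A - B) (C - (B \<union> (A - B)))
                  * a B * b (A - B) * (c (C - (B \<union> (A - B))) :: 'k::field)"
proof -
  have fA: "finite A" "finite B" using A B fin by (auto intro: finite_subset)
  have e: "B \<union> (A - B) = A" using B by auto
  have "gr_sign A (C - A) = (gr_sign B (C - A) * gr_sign (A - B) (C - A) :: 'k)"
    using sign_union_left[of B "A - B" "C - A"] fA fin e by auto
  thus ?thesis using e by (simp add: ac_simps)
qed

lemma xm_assoc_aux2: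
  assumes fin: "finite C" and B: "B \<subseteq> C" and D: "D \<subseteq> C - B"
  shows "gr_sign B (C - B) * a B * (gr_sign D (C - B - D) * b D * c (C - B - D)) =
    gr_sign B D * gr_sign B (C - (B \<union> D)) * gr_sign D (C - (B \<union> D))
                  * a B * b D * (c (C - (B \<union> D)) :: 'k::field)"
proof -
  have fA: "finite B" "finite D" "finite (C - (B \<union> D))" using B D fin by (auto intro: finite_subset)
  have e: "D \<union> (C - (B \<union> D)) = C - B" "C - B - D = C - (B \<union> D)" using D B by auto
  have "gr_sign B (C - B) = (gr_sign B D * gr_sign B (C - (B \<union> D)) :: 'k)"
    using sign_union_right[of B D "C - (B \<union> D)"] fA e by auto
  thus ?thesis using e by (simp add: ac_simps)
qed

lemma xm_assoc: "xm (xm a b) c = xm a (xm b c)"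
proof
  fix C
  show "xm (xm a b) c C = xm a (xm b c) C"
  proof (cases "finite C")
    case False thus ?thesis by (simp add: xm_infinite)
  next
    case fin: True
    let ?F = "\<lambda>B D. gr_sign B D * gr_sign B (C - (B \<union> D)) * gr_sign D (C - (B \<union> D))
                  * a B * b D * c (C - (B \<union> D))"
    have "xm (xm a b) c C = (\<Sum>A\<in>Pow C. \<Sum>B\<in>Pow A. gr_sign A (C - A) * (gr_sign B (A - B) * a B * b (A - B)) * c (C - A))"
      by (simp add: xm_def sum_distrib_left sum_distrib_right)
    also have "\<dots> = (\<Sum>A\<in>Pow C. \<Sum>B\<in>Pow A. ?F B (A - B))"
      by (intro sum.cong refl, rule xm_assoc_aux1[OF fin]) auto
    also have "\<dots> = (\<Sum>(A,B)\<in>Sigma (Pow C) Pow. ?F B (A - B))"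
      using fin by (subst sum.Sigma) (auto intro: finite_subset)
    also have "\<dots> = (\<Sum>(B,D)\<in>Sigma (Pow C) (\<lambda>B. Pow (C - B)). ?F B D)"
      by (rule sum.reindex_bij_witness[where i="\<lambda>(B,D). (B \<union> D, B)" and j="\<lambda>(A,B). (B, A - B)"]) auto
    also have "\<dots> = (\<Sum>B\<in>Pow C. \<Sum>D\<in>Pow (C - B). ?F B D)"
      using fin by (subst sum.Sigma) (auto intro: finite_subset)
    also have "\<dots> = (\<Sum>B\<in>Pow C. \<Sum>D\<in>Pow (C - B). gr_sign B (C - B) * a B * (gr_sign D (C - B - D) * b D * c (C - B - D)))"
      by (intro sum.cong refl, rule xm_assoc_aux2[OF fin, symmetric]) auto
    also have "\<dots> = xm a (xm b c) C"
      by (simp add: xm_def sum_distrib_left sum_distrib_right)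
    finally show ?thesis .
  qed
qed

definition mono :: "nat set \<Rightarrow> 'k::field gr" where
  "mono A = (\<lambda>X. if X = A then 1 else 0)"

abbreviation one_g :: "'k::field gr" where "one_g \<equiv> mono {}"

definition sc :: "'k::field \<Rightarrow> 'k gr \<Rightarrow> 'k gr" where
  "sc c X = (\<lambda>A. c * X A)"

definition fz :: "'k::field gr \<Rightarrow> bool" where
  "fz X \<longleftrightarrow> (\<forall>C. infinite C \<longrightarrow> X C = 0)"

lemma fz_xm[simp]: "fz (xm a b)" by (simp add: fz_def xm_infinite)
lemma fz_mono[simp]: "finite A \<Longrightarrow> fz (mono A)" by (auto simp: fz_def mono_def)
lemma fz_add[simp]: "fz a \<Longrightarrow> fz b \<Longrightarrow> fz (a + b)" by (simp add: fz_def)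
lemma fz_sc[simp]: "fz a \<Longrightarrow> fz (sc c a)" by (simp add: fz_def sc_def)
lemma fz_zero[simp]: "fz 0" by (simp add: fz_def)
lemma fz_uminus[simp]: "fz a \<Longrightarrow> fz (- a)" by (simp add: fz_def)
lemma fz_sum[simp]: "(\<And>i. i \<in> I \<Longrightarrow> fz (f i)) \<Longrightarrow> fz (\<Sum>i\<in>I. f i)"
  by (induction I rule: infinite_finite_induct) auto

lemma sign_empty_left[simp]: "gr_sign {} B = 1" by (simp add: gr_sign_def)
lemma sign_empty_right[simp]: "gr_sign A {} = 1" by (simp add: gr_sign_def)

lemma xm_mono_left:
  assumes "finite S"
  shows "xm (mono A) b S = (if A \<subseteq> S then gr_sign A (S - A) * b (S - A) else 0)"
proof -
  have "xm (mono A) b S = (\<Sum>X\<in>Pow S. if X = A then gr_sign A (S - A) * b (S - A) else 0)"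
    unfolding xm_def mono_def by (intro sum.cong refl) auto
  also have "\<dots> = (if A \<subseteq> S then gr_sign A (S - A) * b (S - A) else 0)"
    using assms by (subst sum.delta) auto
  finally show ?thesis .
qed

lemma xm_mono_right:
  assumes "finite S"
  shows "xm a (mono B) S = (if B \<subseteq> S then gr_sign (S - B) B * a (S - B) else 0)"
proof -
  have "xm a (mono B) S = (\<Sum>X\<in>Pow S. if X = S - B then (if B \<subseteq> S then gr_sign (S - B) B * a (S - B) else 0) else 0)"
    unfolding xm_def mono_def by (intro sum.cong refl) (auto simp: Diff_Diff_Int Int_absorb1)
  also have "\<dots> = (if B \<subseteq> S then gr_sign (S - B) B * a (S - B) else 0)"
    using assms by (subst sum.delta) auto
  finally show ?thesis .
qed

lemma xm_one_left: "fz X \<Longrightarrow> xm one_g X = X"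
  by (rule ext, case_tac "finite x") (auto simp: xm_mono_left fz_def xm_infinite)

lemma xm_one_right: "fz X \<Longrightarrow> xm X one_g = X"
  by (rule ext, case_tac "finite x") (auto simp: xm_mono_right fz_def xm_infinite)

lemma xm_add_left: "xm (a + b) c = xm a c + xm b c"
  by (rule ext) (simp add: xm_def algebra_simps sum.distrib)

lemma xm_add_right: "xm a (b + c) = xm a b + xm a c"
  by (rule ext) (simp add: xm_def algebra_simps sum.distrib)

lemma xm_sc_left: "xm (sc k a) c = sc k (xm a c)"
  by (rule ext) (simp add: xm_def sc_def sum_distrib_left algebra_simps)

lemma xm_sc_right: "xm a (sc k c) = sc k (xm a c)"
  by (rule ext) (simp add: xm_def sc_def sum_distrib_left algebra_simps)

lemma xm_zero_left[simp]: "xm 0 c = 0"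
  by (rule ext) (simp add: xm_def)

lemma xm_zero_right[simp]: "xm a 0 = 0"
  by (rule ext) (simp add: xm_def)

lemma xm_uminus_left: "xm (- a) c = - xm a c"
  by (rule ext) (simp add: xm_def sum_negf)

lemma xm_uminus_right: "xm a (- c) = - xm a c"
  by (rule ext) (simp add: xm_def sum_negf)

lemma xm_sum_left: "xm (\<Sum>i\<in>I. f i) c = (\<Sum>i\<in>I. xm (f i) c)"
proof (induction I rule: infinite_finite_induct)
  case (insert x F) thus ?case by (simp only: sum.insert[OF insert(1,2)] xm_add_left insert(3))
qed (simp_all only: sum.infinite sum.empty xm_zero_left not_False_eq_True)

lemma xm_sum_right: "xm c (\<Sum>i\<in>I. f i) = (\<Sum>i\<in>I. xm c (f i))"
proof (induction I rule: infinite_finite_induct)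
  case (insert x F) thus ?case by (simp only: sum.insert[OF insert(1,2)] xm_add_right insert(3))
qed (simp_all only: sum.infinite sum.empty xm_zero_right not_False_eq_True)

lemma sc_add: "sc k (a + b) = sc k a + sc k b" by (rule ext) (simp add: sc_def algebra_simps)
lemma sc_sc: "sc k (sc l a) = sc (k * l) a" by (rule ext) (simp add: sc_def)
lemma sc_one[simp]: "sc 1 a = a" by (rule ext) (simp add: sc_def)
lemma sc_zero[simp]: "sc 0 a = 0" by (rule ext) (simp add: sc_def)
lemma sc_zero_right[simp]: "sc k 0 = 0" by (rule ext) (simp add: sc_def)
lemma sc_minus_one: "sc (-1) a = - a" by (rule ext) (simp add: sc_def)

lemma xm_swap:
  assumes fin: "finite C"
  shows "xm b a C = (\<Sum>A\<in>Pow C. (-1) ^ (card A * card (C - A)) * gr_sign A (C - A) * a A * b (C - A))"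
proof -
  have "xm b a C = (\<Sum>A\<in>Pow C. gr_sign (C - A) (C - (C - A)) * b (C - A) * a (C - (C - A)))"
    unfolding xm_def
    by (rule sum.reindex_bij_witness[where i="\<lambda>A. C - A" and j="\<lambda>A. C - A"]) (auto simp: double_diff)
  also have "\<dots> = (\<Sum>A\<in>Pow C. (-1) ^ (card A * card (C - A)) * gr_sign A (C - A) * a A * b (C - A))"
  proof (intro sum.cong refl)
    fix A assume A: "A \<in> Pow C"
    have e: "C - (C - A) = A" using A by auto
    have "gr_sign (C - A) A = (-1) ^ (card A * card (C - A)) * (gr_sign A (C - A) :: 'a)"
      using sign_swap[of A "C - A"] A fin by (auto intro: finite_subset)
    thus "gr_sign (C - A) (C - (C - A)) * b (C - A) * a (C - (C - A)) =
      (-1) ^ (card A * card (C - A)) * gr_sign A (C - A) * a A * b (C - A)"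
      using e by (simp add: ac_simps)
  qed
  finally show ?thesis .
qed

definition evs :: "'k::field gr \<Rightarrow> bool" where
  "evs a \<longleftrightarrow> (\<forall>A. a A \<noteq> 0 \<longrightarrow> even (card A))"
definition ods :: "'k::field gr \<Rightarrow> bool" where
  "ods a \<longleftrightarrow> (\<forall>A. a A \<noteq> 0 \<longrightarrow> odd (card A))"

definition ev :: "'k::field gr \<Rightarrow> 'k gr" where
  "ev a = (\<lambda>A. if even (card A) then a A else 0)"
definition od :: "'k::field gr \<Rightarrow> 'k gr" where
  "od a = (\<lambda>A. if odd (card A) then a A else 0)"

lemma ev_od: "ev a + od a = a" by (rule ext) (simp add: ev_def od_def)
lemma evs_ev[simp]: "evs (ev a)" by (simp add: evs_def ev_def)
lemma ods_od[simp]: "ods (od a)" by (simp add: ods_def od_def)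
lemma ev_add: "ev (a + b) = ev a + ev b" by (rule ext) (simp add: ev_def)
lemma od_add: "od (a + b) = od a + od b" by (rule ext) (simp add: od_def)
lemma fz_ev[simp]: "fz a \<Longrightarrow> fz (ev a)" by (simp add: fz_def ev_def)
lemma fz_od[simp]: "fz a \<Longrightarrow> fz (od a)" by (simp add: fz_def od_def)

lemma ev_comm:
  assumes "evs a"
  shows "xm b a = xm a b"
proof
  fix C show "xm b a C = xm a b C"
  proof (cases "finite C")
    case False thus ?thesis by (simp add: xm_infinite)
  next
    case True
    have "xm b a C = (\<Sum>A\<in>Pow C. (-1) ^ (card A * card (C - A)) * gr_sign A (C - A) * a A * b (C - A))"
      by (rule xm_swap[OF True])
    also have "\<dots> = xm a b C" unfolding xm_def
    proof (intro sum.cong refl)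
      fix A assume "A \<in> Pow C"
      show "(-1) ^ (card A * card (C - A)) * gr_sign A (C - A) * a A * b (C - A) =
        gr_sign A (C - A) * a A * b (C - A)"
      proof (cases "a A = 0")
        case False
        hence "even (card A * card (C - A))" using assms by (auto simp: evs_def)
        thus ?thesis by simp
      qed simp
    qed
    finally show ?thesis .
  qed
qed

lemma ods_anti:
  assumes "ods a" "ods b"
  shows "xm b a = - xm a b"
proof
  fix C show "xm b a C = (- xm a b) C"
  proof (cases "finite C")
    case False thus ?thesis by (simp add: xm_infinite)
  next
    case True
    have "xm b a C = (\<Sum>A\<in>Pow C. (-1) ^ (card A * card (C - A)) * gr_sign A (C - A) * a A * b (C - A))"
      by (rule xm_swap[OF True])
    also have "\<dots> = (\<Sum>A\<in>Pow C. - (gr_sign A (C - A) * a A * b (C - A)))"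
    proof (intro sum.cong refl)
      fix A assume "A \<in> Pow C"
      show "(-1) ^ (card A * card (C - A)) * gr_sign A (C - A) * a A * b (C - A) =
        - (gr_sign A (C - A) * a A * b (C - A))"
      proof (cases "a A = 0 \<or> b (C - A) = 0")
        case False
        hence "odd (card A * card (C - A))" using assms by (auto simp: ods_def)
        thus ?thesis by simp
      qed auto
    qed
    also have "\<dots> = (- xm a b) C" by (simp add: xm_def sum_negf)
    finally show ?thesis .
  qed
qed

lemma card_split: "finite C \<Longrightarrow> A \<subseteq> C \<Longrightarrow> card C = card A + card (C - A)"
  by (metis card_Diff_subset card_mono finite_subset le_add_diff_inverse)

lemma xm_nonzero:
  assumes "xm a b C \<noteq> 0"
  shows "finite C \<and> (\<exists>A. A \<subseteq> C \<and> a A \<noteq> 0 \<and> b (C - A) \<noteq> 0)"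
proof -
  have "finite C" using assms xm_infinite by blast
  moreover obtain A where "A \<in> Pow C" "gr_sign A (C - A) * a A * b (C - A) \<noteq> 0"
    using assms unfolding xm_def by (meson sum.neutral)
  ultimately show ?thesis by auto
qed

lemma par_xm:
  assumes "\<And>A B. a A \<noteq> 0 \<Longrightarrow> b B \<noteq> 0 \<Longrightarrow> finite A \<Longrightarrow> finite B \<Longrightarrow> P (card A + card B)"
  shows "\<forall>C. xm a b C \<noteq> 0 \<longrightarrow> P (card C)"
proof (intro allI impI)
  fix C assume "xm a b C \<noteq> 0"
  from xm_nonzero[OF this] obtain A where "finite C" "A \<subseteq> C" "a A \<noteq> 0" "b (C - A) \<noteq> 0" by blast
  thus "P (card C)" using assms[of A "C - A"] card_split[of C A] by (auto intro: finite_subset)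
qed

lemma evs_xm_ee: "evs a \<Longrightarrow> evs b \<Longrightarrow> evs (xm a b)"
  unfolding evs_def by (rule par_xm) auto
lemma evs_xm_oo: "ods a \<Longrightarrow> ods b \<Longrightarrow> evs (xm a b)"
  unfolding evs_def ods_def by (rule par_xm) auto
lemma ods_xm_eo: "evs a \<Longrightarrow> ods b \<Longrightarrow> ods (xm a b)"
  unfolding evs_def ods_def by (rule par_xm) auto
lemma ods_xm_oe: "ods a \<Longrightarrow> evs b \<Longrightarrow> ods (xm a b)"
  unfolding evs_def ods_def by (rule par_xm) auto

lemma ev_evs: "evs a \<Longrightarrow> ev a = a" by (rule ext) (auto simp: evs_def ev_def)
lemma od_evs: "evs a \<Longrightarrow> od a = 0" by (rule ext) (auto simp: evs_def od_def)
lemma od_ods: "ods a \<Longrightarrow> od a = a" by (rule ext) (auto simp: ods_def od_def)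
lemma ev_ods: "ods a \<Longrightarrow> ev a = 0" by (rule ext) (auto simp: ods_def ev_def)

lemma neg_self_zero:
  assumes "(y::'k::field) = - y" "(2::'k) \<noteq> 0" shows "y = 0"
proof -
  have "y + y = 0" using assms(1) eq_neg_iff_add_eq_0 by blast
  hence "2 * y = 0" by (simp only: mult_2)
  thus ?thesis using assms(2) by simp
qed

lemma ods_sq:
  assumes "ods a" and two: "(2::'k::field) \<noteq> 0"
  shows "xm a a = (0 :: 'k gr)"
proof
  fix C
  have e: "xm a a C = (- xm a a) C" using ods_anti[OF assms(1) assms(1)] by (rule fun_cong)
  have "xm a a C = - xm a a C" using e[unfolded uminus_apply] .
  from neg_self_zero[OF this two] show "xm a a C = 0 C" by simp
qed


definition xi :: "nat \<Rightarrow> 'k::field gr" where "xi t = mono {t}"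

definition prodw :: "(nat \<Rightarrow> 'k::field gr) \<Rightarrow> nat list \<Rightarrow> 'k gr" where
  "prodw g w = foldr (\<lambda>t acc. xm (g t) acc) w one_g"

lemma prodw_Nil[simp]: "prodw g [] = one_g" by (simp add: prodw_def)
lemma prodw_Cons[simp]: "prodw g (t # w) = xm (g t) (prodw g w)" by (simp add: prodw_def)

lemma fz_prodw[simp]: "fz (prodw g w)" by (cases w) auto

lemma prodw_append: "prodw g (a @ b) = xm (prodw g a) (prodw g b)"
  by (induction a) (auto simp: xm_one_left xm_assoc)

fun Nw :: "nat list \<Rightarrow> 'k::field gr" where
  "Nw [] = 0"
| "Nw (t # w) = xi t + Nw w"

lemma Nw_append: "Nw (a @ b) = Nw a + Nw b"
  by (induction a) (auto simp: add.assoc)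

lemma Nw_single: "Nw w {t} = of_nat (count_list w t)"
  by (induction w) (auto simp: xi_def mono_def)

lemma Nw_nonsingle: "(\<forall>t. A \<noteq> {t}) \<Longrightarrow> Nw w A = 0"
  by (induction w) (auto simp: xi_def mono_def)

lemma ods_xi[simp]: "ods (xi t)" by (simp add: ods_def xi_def mono_def)
lemma fz_xi[simp]: "fz (xi t)" by (simp add: xi_def)

lemma ods_Nw[simp]: "ods (Nw w)"
  unfolding ods_def
proof (intro allI impI)
  fix A assume "Nw w A \<noteq> 0"
  then obtain t where "A = {t}" using Nw_nonsingle by blast
  thus "odd (card A)" by simp
qed

lemma ev_xm_odd:
  assumes "ods a" shows "ev (xm a b) = xm a (od b)"
proof -
  have "xm a b = xm a (ev b) + xm a (od b)" by (metis ev_od xm_add_right)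
  thus ?thesis using assms
    by (simp add: ev_add ev_ods[OF ods_xm_oe] ev_evs[OF evs_xm_oo])
qed

lemma od_xm_odd:
  assumes "ods a" shows "od (xm a b) = xm a (ev b)"
proof -
  have "xm a b = xm a (ev b) + xm a (od b)" by (metis ev_od xm_add_right)
  thus ?thesis using assms
    by (simp add: od_add od_ods[OF ods_xm_oe] od_evs[OF evs_xm_oo])
qed

definition gP :: "nat \<Rightarrow> nat \<Rightarrow> 'k::field gr" where
  "gP m t = (if t \<in> {1..2*m} then one_g + xi t else 0)"

lemma xi_lemma:
  assumes "set w \<subseteq> {1..2*m}" and two: "(2::'k::field) \<noteq> 0"
  shows "od (prodw (gP m) w) = xm (Nw w) (ev (prodw (gP m) w) :: 'k gr)"
  using assms(1)
proof (induction w)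
  case Nil
  have "od (one_g::'k gr) = 0" by (rule ext) (simp add: od_def mono_def)
  thus ?case by (simp only: prodw_Nil Nw.simps xm_zero_left)
next
  case (Cons t w)
  let ?P = "prodw (gP m) w :: 'k gr"
  let ?E = "ev ?P" and ?O = "od ?P" and ?N = "Nw w :: 'k gr" and ?x = "xi t :: 'k gr"
  have tV: "t \<in> {1..2*m}" and wV: "set w \<subseteq> {1..2*m}" using Cons.prems by auto
  have IH: "?O = xm ?N ?E" using Cons.IH wV by simp
  have P: "prodw (gP m) (t # w) = ?P + xm ?x ?P"
    using tV by (simp add: gP_def xm_add_left xm_one_left)
  have E': "ev (prodw (gP m) (t # w)) = ?E + xm ?x ?O"
    unfolding P ev_add by (simp add: ev_xm_odd)
  have O': "od (prodw (gP m) (t # w)) = ?O + xm ?x ?E"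
    unfolding P od_add by (simp add: od_xm_odd)
  have z1: "xm ?x (xm ?x ?O) = 0"
    by (simp add: xm_assoc[symmetric] ods_sq[OF ods_xi two])
  have "xm ?N ?x = - xm ?x ?N" by (rule ods_anti) simp_all
  hence z2: "xm ?N (xm ?x ?O) = 0"
    unfolding IH
    by (simp add: xm_assoc[symmetric] xm_uminus_left)
       (simp add: xm_assoc[of "xi t" "Nw w" "Nw w"] ods_sq[OF ods_Nw two])
  have "xm (Nw (t # w)) (ev (prodw (gP m) (t # w))) = xm (?x + ?N) (?E + xm ?x ?O)"
    unfolding E' by simp
  also have "\<dots> = xm ?x ?E + xm ?x (xm ?x ?O) + xm ?N ?E + xm ?N (xm ?x ?O)"
    by (simp add: xm_add_left xm_add_right add.assoc)
  also have "\<dots> = ?O + xm ?x ?E" using z1 z2 IH by (simp add: add.commute)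
  finally show ?case using O' by (simp only:)
qed

lemma Nw_sum_zero:
  assumes "set a \<subseteq> {1..2*m}" "set b \<subseteq> {1..2*m}"
    and cnt: "\<forall>t\<in>{1..2*m}. count_list a t + count_list b t = p"
    and pz: "of_nat p = (0::'k::field)"
  shows "Nw a + Nw b = (0 :: 'k gr)"
proof
  fix A
  show "(Nw a + Nw b) A = (0 :: 'k gr) A"
  proof (cases "\<exists>t. A = {t}")
    case True
    then obtain t where A: "A = {t}" by blast
    show ?thesis
    proof (cases "t \<in> {1..2*m}")
      case True
      have "(Nw a + Nw b) A = of_nat (count_list a t + count_list b t)"
        by (simp add: A Nw_single)
      also have "\<dots> = (of_nat p :: 'k)" using cnt True by simp
      finally show ?thesis by (simp only: pz zero_fun_apply)
    next
      case False
      hence "t \<notin> set a" "t \<notin> set b" using assms(1,2) by auto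
      thus ?thesis by (simp add: A Nw_single)
    qed
  next
    case False thus ?thesis by (simp add: Nw_nonsingle)
  qed
qed

lemma comm_key:
  assumes "set a \<subseteq> {1..2*m}" "set b \<subseteq> {1..2*m}"
    and cnt: "\<forall>t\<in>{1..2*m}. count_list a t + count_list b t = p"
    and pz: "of_nat p = (0::'k::field)" and two: "(2::'k) \<noteq> 0"
  shows "xm (prodw (gP m) a) (prodw (gP m) b) = (xm (prodw (gP m) b) (prodw (gP m) a) :: 'k gr)"
proof -
  let ?X = "prodw (gP m) a :: 'k gr" and ?Y = "prodw (gP m) b :: 'k gr"
  let ?E1 = "ev ?X" and ?O1 = "od ?X" and ?E2 = "ev ?Y" and ?O2 = "od ?Y"
  let ?N1 = "Nw a :: 'k gr" and ?N2 = "Nw b :: 'k gr"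
  have O1: "?O1 = xm ?N1 ?E1" using xi_lemma[OF assms(1) two] .
  have O2: "?O2 = xm ?N2 ?E2" using xi_lemma[OF assms(2) two] .
  have N2: "?N2 = - ?N1" using Nw_sum_zero[OF assms(1,2) cnt pz] by (simp add: eq_neg_iff_add_eq_0 add.commute)
  have c1: "xm ?E1 (xm ?N1 ?E2) = xm ?N1 (xm ?E1 ?E2)"
    by (simp add: xm_assoc[symmetric] ev_comm[OF evs_ev, of ?N1 ?X])
  have OO: "xm ?O1 ?O2 = 0"
  proof -
    have "xm ?O1 ?O2 = xm (xm ?N1 ?E1) (xm (- ?N1) ?E2)" using O1 O2 N2 by simp
    also have "\<dots> = - xm ?N1 (xm ?E1 (xm ?N1 ?E2))"
      by (simp add: xm_uminus_left xm_uminus_right xm_assoc)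
    also have "\<dots> = - xm (xm ?N1 ?N1) (xm ?E1 ?E2)"
      by (simp add: c1 xm_assoc)
    also have "\<dots> = 0" by (simp add: ods_sq[OF ods_Nw two])
    finally show ?thesis .
  qed
  have OO': "xm ?O2 ?O1 = 0" using ods_anti[OF ods_od ods_od, of ?X ?Y] OO by simp
  have "xm ?X ?Y = xm ?E1 ?Y + xm ?O1 ?E2 + xm ?O1 ?O2"
    by (metis ev_od xm_add_left xm_add_right add.assoc)
  also have "\<dots> = xm ?Y ?E1 + xm ?E2 ?O1 + xm ?O2 ?O1"
    using OO OO' by (simp add: ev_comm[OF evs_ev])
  also have "\<dots> = xm ?Y ?X"
    by (metis ev_od xm_add_left xm_add_right add.assoc)
  finally show ?thesis .
qed


definition pidx :: "nat \<Rightarrow> nat \<Rightarrow> nat \<Rightarrow> nat \<Rightarrow> nat" where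
  "pidx m p t j = 2 * (2 * m + 1 + t * p + j)"

definition pr :: "nat \<Rightarrow> nat \<Rightarrow> nat \<Rightarrow> nat \<Rightarrow> nat set" where
  "pr m p t j = {pidx m p t j, Suc (pidx m p t j)}"

definition TJ :: "nat \<Rightarrow> nat \<Rightarrow> (nat \<times> nat) set \<Rightarrow> nat set" where
  "TJ m p J = (\<Union>(t,j)\<in>J. pr m p t j)"

definition kt :: "(nat \<times> nat) set \<Rightarrow> nat \<Rightarrow> nat" where
  "kt J t = card {j. (t, j) \<in> J}"

definition Dom :: "nat \<Rightarrow> nat \<Rightarrow> (nat \<times> nat) set" where
  "Dom m p = {1..2*m} \<times> {..<p-1}"

definition zt :: "nat \<Rightarrow> nat \<Rightarrow> nat \<Rightarrow> 'k::field gr" where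
  "zt m p t = (\<Sum>j<p-1. mono (pr m p t j))"

definition gU :: "nat \<Rightarrow> nat \<Rightarrow> nat \<Rightarrow> 'k::field gr" where
  "gU m p t = (if t \<in> {1..2*m} then xi t + zt m p t else 0)"

lemma pidx_gt: "t \<le> 2 * m \<Longrightarrow> pidx m p s j > t"
  by (simp add: pidx_def)

lemma pidx_inj:
  assumes "j < p" "j' < p" "pidx m p t j = pidx m p t' j'"
  shows "t = t' \<and> j = j'"
proof -
  have e: "t * p + j = t' * p + j'" using assms(3) by (simp add: pidx_def)
  hence "(t * p + j) div p = (t' * p + j') div p" "(t * p + j) mod p = (t' * p + j') mod p" by simp_all
  thus ?thesis using assms(1,2) by simp
qed

lemma pidx_even: "even (pidx m p t j)" by (simp add: pidx_def)

lemma pr_eq_iff: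
  assumes "j < p" "j' < p"
  shows "x \<in> pr m p t j \<and> x \<in> pr m p t' j' \<longleftrightarrow> x \<in> pr m p t j \<and> t = t' \<and> j = j'"
proof -
  have "pidx m p t j = pidx m p t' j'" if "x \<in> pr m p t j" "x \<in> pr m p t' j'"
    using that pidx_even[of m p t j] pidx_even[of m p t' j'] by (auto simp: pr_def) presburger+
  thus ?thesis using pidx_inj[OF assms] by blast
qed

lemma pr_gt: "t \<le> 2 * m \<Longrightarrow> x \<in> pr m p s j \<Longrightarrow> x > t"
  using pidx_gt[of t m p s j] by (auto simp: pr_def)

lemma TJ_gt: "t \<le> 2 * m \<Longrightarrow> x \<in> TJ m p J \<Longrightarrow> x > t"
  using pr_gt by (auto simp: TJ_def)

lemma finite_pr[simp]: "finite (pr m p t j)" by (simp add: pr_def)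

lemma finite_TJ: "finite J \<Longrightarrow> finite (TJ m p J)" by (auto simp: TJ_def)

lemma finite_Dom[simp]: "finite (Dom m p)" by (simp add: Dom_def)

lemma inv_empty_gt: "(\<forall>x\<in>X. x > t) \<Longrightarrow> gr_sign {t} X = 1"
proof -
  assume "\<forall>x\<in>X. x > t"
  hence "inv_set {t} X = {}" by (auto simp: inv_set_def)
  thus ?thesis by (simp add: gr_sign_inv)
qed

lemma sign_single_TJ:
  assumes "t \<le> 2 * m" "finite C" "finite J" "C \<inter> TJ m p J = {}"
  shows "gr_sign {t} (C \<union> TJ m p J) = (gr_sign {t} C :: 'k::field)"
proof -
  have "gr_sign {t} (C \<union> TJ m p J) = (gr_sign {t} C * gr_sign {t} (TJ m p J) :: 'k)"
    by (rule sign_union_right) (use assms finite_TJ in auto)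
  moreover have "gr_sign {t} (TJ m p J) = (1::'k)" by (rule inv_empty_gt) (use TJ_gt[OF assms(1)] in blast)
  ultimately show ?thesis by simp
qed

lemma sign_pair:
  assumes "a \<notin> X" "Suc a \<notin> X" "finite X"
  shows "gr_sign {a, Suc a} X = (1::'k::field)"
proof -
  have "inv_set {Suc a} X = map_prod Suc id ` inv_set {a} X"
    using assms by (auto simp: inv_set_def image_iff less_Suc_eq)
  moreover have "inj (map_prod Suc (id::nat\<Rightarrow>nat))" by (auto simp: inj_def)
  ultimately have c: "card (inv_set {Suc a} X) = card (inv_set {a} X)"
    by (simp add: card_image inj_on_subset)
  have "gr_sign ({a} \<union> {Suc a}) X = (gr_sign {a} X * gr_sign {Suc a} X :: 'k)"
    using assms by (intro sign_union_left) auto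
  also have "\<dots> = 1" using c by (simp add: gr_sign_inv flip: power_add)
  finally show ?thesis by (simp add: insert_commute)
qed

lemma gP_supp: "gP m t B \<noteq> (0::'k::field) \<Longrightarrow> B \<subseteq> {t}"
proof -
  assume h: "gP m t B \<noteq> (0::'k)"
  have "gP m t B = (if t\<in>{1..2*m} then (if B = {} then 1 else 0) + (if B = {t} then 1 else (0::'k)) else 0)"
    by (simp add: gP_def xi_def mono_def)
  with h show ?thesis by (auto split: if_splits)
qed

lemma P_supp: "prodw (gP m) w A \<noteq> (0::'k::field) \<Longrightarrow> A \<subseteq> set w"
proof (induction w arbitrary: A)
  case Nil thus ?case by (cases "A = {}") (auto simp: mono_def)
next
  case (Cons t w)
  have "xm (gP m t) (prodw (gP m) w) A \<noteq> (0::'k)" using Cons.prems by (simp only: prodw_Cons not_False_eq_True)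
  from xm_nonzero[OF this] obtain B where
    B: "B \<subseteq> A" "gP m t B \<noteq> (0::'k)" "prodw (gP m) w (A - B) \<noteq> (0::'k)" by blast
  have "B \<subseteq> {t}" using B(2) by (rule gP_supp)
  moreover have "A - B \<subseteq> set w" using Cons.IH B(3) by blast
  ultimately show ?case by auto
qed

lemma sum_fun_app: "(\<Sum>i\<in>I. f i) x = (\<Sum>i\<in>I. (f i x :: 'a::comm_monoid_add))"
  by (induction I rule: infinite_finite_induct) auto

lemma P_step:
  assumes "t \<in> {1..2*m}" "finite C"
  shows "prodw (gP m) (t # w) C = prodw (gP m) w C +
     (if t \<in> C then gr_sign {t} (C - {t}) * prodw (gP m) w (C - {t}) else (0::'k::field))"
  using assms by (simp add: gP_def xm_add_left xm_one_left xi_def xm_mono_left)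

lemma W_step:
  assumes "t \<in> {1..2*m}" "finite S"
  shows "prodw (gU m p) (t # w) S =
    (if t \<in> S then gr_sign {t} (S - {t}) * prodw (gU m p) w (S - {t}) else (0::'k::field)) +
    (\<Sum>j<p-1. if pr m p t j \<subseteq> S then gr_sign (pr m p t j) (S - pr m p t j) * prodw (gU m p) w (S - pr m p t j) else 0)"
  using assms by (simp add: gU_def zt_def xm_add_left xm_sum_left sum_fun_app xi_def xm_mono_left)

definition Qv :: "nat \<Rightarrow> nat \<Rightarrow> nat list \<Rightarrow> nat set \<Rightarrow> (nat \<times> nat) set \<Rightarrow> 'k::field" where
  "Qv m p w C J = (if set w \<subseteq> {1..2*m} \<and> (\<forall>t\<in>{1..2*m}. kt J t + (if t \<in> C then 1 else 0) = count_list w t)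
      then of_nat (\<Prod>t\<in>{1..2*m}. fact (kt J t)) else 0)"

lemma finite_J: "J \<subseteq> Dom m p \<Longrightarrow> finite J"
  using finite_Dom finite_subset by blast

lemma finite_ktset: "J \<subseteq> Dom m p \<Longrightarrow> finite {j. (t, j) \<in> J}"
  by (rule finite_subset[of _ "{..<p-1}"]) (auto simp: Dom_def)

lemma kt_remove:
  assumes "J \<subseteq> Dom m p" "(t, j) \<in> J"
  shows "kt (J - {(t, j)}) s = kt J s - (if s = t then 1 else 0)" and "kt J t \<ge> 1"
proof -
  have f: "finite {j. (s, j) \<in> J}" for s using finite_ktset[OF assms(1)] .
  show "kt (J - {(t, j)}) s = kt J s - (if s = t then 1 else 0)"
  proof (cases "s = t")
    case True
    have "{j'. (s, j') \<in> J - {(t, j)}} = {j'. (s, j') \<in> J} - {j}" using True by auto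
    thus ?thesis using True assms(2) f by (simp add: kt_def)
  next
    case False
    have "{j'. (s, j') \<in> J - {(t, j)}} = {j'. (s, j') \<in> J}" using False by auto
    thus ?thesis using False by (simp add: kt_def)
  qed
  show "kt J t \<ge> 1" using assms(2) f[of t] unfolding kt_def
    by (metis (mono_tags, lifting) One_nat_def card_0_eq empty_iff le_less_linear less_Suc0 mem_Collect_eq)
qed

lemma sum_kt:
  assumes "J \<subseteq> Dom m p"
  shows "(\<Sum>j<p-1. if (t, j) \<in> J then c else 0) = of_nat (kt J t) * (c::'k::field)"
proof -
  have "(\<Sum>j<p-1. if (t, j) \<in> J then c else 0) = (\<Sum>j\<in>{j\<in>{..<p-1}. (t, j) \<in> J}. c)"
    by (rule sum.inter_filter[symmetric]) simp
  also have "{j\<in>{..<p-1}. (t, j) \<in> J} = {j. (t, j) \<in> J}" using assms by (auto simp: Dom_def)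
  finally show ?thesis by (simp add: kt_def)
qed

lemma S_mem_t:
  assumes "t \<in> {1..2*m}" shows "t \<in> C \<union> TJ m p J \<longleftrightarrow> t \<in> C"
  using TJ_gt[of t m _ p J] assms by auto

lemma S_minus_t:
  assumes "t \<in> {1..2*m}" shows "(C \<union> TJ m p J) - {t} = (C - {t}) \<union> TJ m p J"
  using TJ_gt[of t m _ p J] assms by auto

lemma C_TJ_disj: "C \<subseteq> {1..2*m} \<Longrightarrow> C \<inter> TJ m p J = {}"
  using TJ_gt[of _ m _ p J] by fastforce

lemma pr_sub_S:
  assumes "t \<in> {1..2*m}" "j < p - 1" "C \<subseteq> {1..2*m}" "J \<subseteq> Dom m p"
  shows "pr m p t j \<subseteq> C \<union> TJ m p J \<longleftrightarrow> (t, j) \<in> J"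
proof
  assume h: "pr m p t j \<subseteq> C \<union> TJ m p J"
  have "pidx m p t j \<in> pr m p t j" by (simp add: pr_def)
  moreover have "pidx m p t j \<notin> C"
  proof
    assume "pidx m p t j \<in> C"
    hence "pidx m p t j \<le> 2 * m" using assms(3) by auto
    thus False using pidx_gt[of "pidx m p t j" m p t j] by simp
  qed
  ultimately have "pidx m p t j \<in> TJ m p J" using h by auto
  then obtain t' j' where tj: "(t', j') \<in> J" "pidx m p t j \<in> pr m p t' j'" by (auto simp: TJ_def)
  have "j' < p" using tj(1) assms(4) by (auto simp: Dom_def)
  moreover have "j < p" using assms(2) by simp
  ultimately have "t = t' \<and> j = j'"
    using pr_eq_iff[of j p j' "pidx m p t j" m t t'] tj(2) by (auto simp: pr_def)
  thus "(t, j) \<in> J" using tj by simp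
next
  assume "(t, j) \<in> J" thus "pr m p t j \<subseteq> C \<union> TJ m p J" by (auto simp: TJ_def)
qed

lemma S_minus_pr:
  assumes "C \<subseteq> {1..2*m}" "J \<subseteq> Dom m p" "(t, j) \<in> J"
  shows "(C \<union> TJ m p J) - pr m p t j = C \<union> TJ m p (J - {(t, j)})"
proof -
  have j: "j < p" using assms by (auto simp: Dom_def)
  have "C \<inter> pr m p t j = {}" using assms(1) pr_gt[where m=m and p=p and s=t and j=j] by fastforce
  moreover have "TJ m p J - pr m p t j = TJ m p (J - {(t, j)})"
  proof
    show "TJ m p J - pr m p t j \<subseteq> TJ m p (J - {(t, j)})" by (auto simp: TJ_def)
    show "TJ m p (J - {(t, j)}) \<subseteq> TJ m p J - pr m p t j"
    proof
      fix x assume "x \<in> TJ m p (J - {(t, j)})"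
      then obtain t' j' where tj: "(t', j') \<in> J" "(t', j') \<noteq> (t, j)" "x \<in> pr m p t' j'"
        by (auto simp: TJ_def)
      have "j' < p" using tj(1) assms(2) by (auto simp: Dom_def)
      hence "x \<notin> pr m p t j" using pr_eq_iff[OF j \<open>j' < p\<close>, of x m t t'] tj(2,3) by auto
      thus "x \<in> TJ m p J - pr m p t j" using tj by (auto simp: TJ_def)
    qed
  qed
  ultimately show ?thesis by blast
qed

lemma sign_pr:
  assumes "finite X" "X \<inter> pr m p t j = {}"
  shows "gr_sign (pr m p t j) X = (1::'k::field)"
  unfolding pr_def by (rule sign_pair) (use assms in \<open>auto simp: pr_def\<close>)

lemma Q1:
  assumes "t \<in> {1..2*m}" "t \<in> C"
  shows "Qv m p w (C - {t}) J = (Qv m p (t # w) C J :: 'k::field)"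
proof -
  have "(\<forall>s\<in>{1..2*m}. kt J s + (if s \<in> C - {t} then 1 else 0) = count_list w s) \<longleftrightarrow>
        (\<forall>s\<in>{1..2*m}. kt J s + (if s \<in> C then 1 else 0) = count_list (t # w) s)"
    using assms by auto
  thus ?thesis using assms(1) by (simp add: Qv_def)
qed

lemma Q2:
  assumes "t \<in> {1..2*m}" "J \<subseteq> Dom m p" "(t, j) \<in> J"
  shows "of_nat (kt J t) * Qv m p w C (J - {(t, j)}) = (Qv m p (t # w) C J :: 'k::field)"
proof -
  let ?V = "{1..2*m}"
  note kr = kt_remove[OF assms(2,3)]
  have k1: "kt J t \<ge> 1" using kr(2) .
  have cond: "(set w \<subseteq> ?V \<and> (\<forall>s\<in>?V. kt (J - {(t, j)}) s + (if s \<in> C then 1 else 0) = count_list w s)) \<longleftrightarrow>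
        (set (t # w) \<subseteq> ?V \<and> (\<forall>s\<in>?V. kt J s + (if s \<in> C then 1 else 0) = count_list (t # w) s))"
  proof -
    have "(kt (J - {(t, j)}) s + (if s \<in> C then 1 else 0) = count_list w s) \<longleftrightarrow>
          (kt J s + (if s \<in> C then 1 else 0) = count_list (t # w) s)" for s
    proof (cases "s = t")
      case True
      hence st: "s = t" .
      have a: "kt (J - {(t, j)}) t = kt J t - 1" using kr(1)[of t] by simp
      have b: "count_list (t # w) t = count_list w t + 1" by simp
      show ?thesis
      proof (cases "t \<in> C")
        case True thus ?thesis using k1 st a b by simp
      next
        case False thus ?thesis using k1 st a b by simp presburger
      qed
    next
      case False
      have "kt (J - {(t, j)}) s = kt J s" using kr(1)[of s] False by simp
      moreover have "count_list (t # w) s = count_list w s" using False by simp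
      ultimately show ?thesis by simp
    qed
    thus ?thesis using assms(1) by auto
  qed
  have fin: "finite ?V" by simp
  have p1: "(\<Prod>s\<in>?V. fact (kt (J - {(t, j)}) s)) = fact (kt J t - 1) * (\<Prod>s\<in>?V - {t}. fact (kt J s)::nat)"
  proof -
    have "(\<Prod>s\<in>?V. fact (kt (J - {(t, j)}) s)) = fact (kt (J - {(t, j)}) t) * (\<Prod>s\<in>?V - {t}. fact (kt (J - {(t, j)}) s)::nat)"
      by (rule prod.remove[OF fin assms(1)])
    also have "(\<Prod>s\<in>?V - {t}. fact (kt (J - {(t, j)}) s)::nat) = (\<Prod>s\<in>?V - {t}. fact (kt J s))"
      by (rule prod.cong[OF refl]) (use kr(1) in simp)
    also have "kt (J - {(t, j)}) t = kt J t - 1" using kr(1)[of t] by simp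
    finally show ?thesis .
  qed
  have p2: "(\<Prod>s\<in>?V. fact (kt J s)) = fact (kt J t) * (\<Prod>s\<in>?V - {t}. fact (kt J s)::nat)"
    using prod.remove[OF fin assms(1)] by simp
  have "fact (kt J t) = kt J t * (fact (kt J t - 1) :: nat)"
    using k1 by (cases "kt J t") auto
  hence val: "kt J t * (\<Prod>s\<in>?V. fact (kt (J - {(t, j)}) s)) = (\<Prod>s\<in>?V. fact (kt J s) :: nat)"
    unfolding p1 p2 by simp
  have v2: "(of_nat (kt J t) * of_nat (\<Prod>s\<in>?V. fact (kt (J - {(t, j)}) s)) :: 'k) = of_nat (\<Prod>s\<in>?V. fact (kt J s))"
    by (simp only: of_nat_mult[symmetric] val)
  show ?thesis
  proof (cases "set (t # w) \<subseteq> ?V \<and> (\<forall>s\<in>?V. kt J s + (if s \<in> C then 1 else 0) = count_list (t # w) s)")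
    case True
    hence c2: "set w \<subseteq> ?V \<and> (\<forall>s\<in>?V. kt (J - {(t, j)}) s + (if s \<in> C then 1 else 0) = count_list w s)"
      using cond by blast
    have e1: "Qv m p (t # w) C J = (of_nat (\<Prod>s\<in>?V. fact (kt J s)) :: 'k)"
      unfolding Qv_def using True by (rule if_P)
    have e2: "Qv m p w C (J - {(t, j)}) = (of_nat (\<Prod>s\<in>?V. fact (kt (J - {(t, j)}) s)) :: 'k)"
      unfolding Qv_def using c2 by (rule if_P)
    show ?thesis unfolding e1 e2 v2 ..
  next
    case False
    hence c2: "\<not> (set w \<subseteq> ?V \<and> (\<forall>s\<in>?V. kt (J - {(t, j)}) s + (if s \<in> C then 1 else 0) = count_list w s))"
      using cond by blast
    have e1: "Qv m p (t # w) C J = (0 :: 'k)"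
      unfolding Qv_def using False by (rule if_not_P)
    have e2: "Qv m p w C (J - {(t, j)}) = (0 :: 'k)"
      unfolding Qv_def using c2 by (rule if_not_P)
    show ?thesis unfolding e1 e2 by simp
  qed
qed

lemma Q3:
  assumes "t \<in> {1..2*m}" "kt J t = 0" "Qv m p (t # w) C J \<noteq> (0::'k::field)"
  shows "t \<in> C \<and> t \<notin> set w"
proof -
  have "kt J t + (if t \<in> C then 1 else 0) = count_list (t # w) t"
    using assms(3,1) unfolding Qv_def by (auto split: if_splits)
  hence "t \<in> C" "count_list w t = 0" using assms(2) by (auto split: if_splits)
  thus ?thesis by (simp add: count_list_0_iff)
qed

lemma TJ_empty_iff: "TJ m p J = {} \<longleftrightarrow> J = {}"
  by (auto simp: TJ_def pr_def)

lemma W_formula: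
  assumes "C \<subseteq> {1..2*m}" "J \<subseteq> Dom m p"
  shows "prodw (gU m p) w (C \<union> TJ m p J) = Qv m p w C J * (prodw (gP m) w C :: 'k::field)"
  using assms
proof (induction w arbitrary: C J)
  case Nil
  show ?case
  proof (cases "C = {} \<and> J = {}")
    case True
    have "Qv m p [] C J = (1::'k)" using True by (simp add: Qv_def kt_def)
    thus ?thesis using True by (simp add: TJ_def mono_def)
  next
    case False
    have l: "prodw (gU m p) [] (C \<union> TJ m p J) = (0::'k)"
      using False TJ_empty_iff[of m p J] by (auto simp: mono_def)
    show ?thesis
    proof (cases "C = {}")
      case False thus ?thesis using l by (simp add: mono_def)
    next
      case True
      with False obtain t j where tj: "(t, j) \<in> J" by auto
      have tV: "t \<in> {1..2*m}" using tj Nil.prems(2) by (auto simp: Dom_def)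
      have "kt J t \<ge> 1" using kt_remove(2)[OF Nil.prems(2) tj] .
      hence "kt J t + (if t \<in> C then 1 else 0) \<noteq> count_list [] t" by simp
      hence "Qv m p [] C J = (0::'k)" using tV unfolding Qv_def by (meson if_not_P)
      thus ?thesis using l by simp
    qed
  qed
next
  case (Cons t w)
  have finC: "finite C" using Cons.prems(1) finite_subset by blast
  have finJ: "finite J" using Cons.prems(2) by (rule finite_J)
  let ?S = "C \<union> TJ m p J"
  have finS: "finite ?S" using finC finite_TJ[OF finJ] by simp
  show ?case
  proof (cases "t \<in> {1..2*m}")
    case False
    hence "\<not> set (t # w) \<subseteq> {1..2*m}" by auto
    hence "Qv m p (t # w) C J = (0::'k)" unfolding Qv_def by (meson if_not_P)
    moreover have "gU m p t = (0 :: 'k gr)" using False unfolding gU_def by (meson if_not_P)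
    ultimately show ?thesis by simp
  next
    case tV: True
    let ?W = "prodw (gU m p) w :: 'k gr" and ?P = "prodw (gP m) w :: 'k gr"
    define A1 where "A1 = (if t \<in> ?S then gr_sign {t} (?S - {t}) * ?W (?S - {t}) else (0::'k))"
    define A2 where "A2 = (\<Sum>j<p-1. if pr m p t j \<subseteq> ?S then gr_sign (pr m p t j) (?S - pr m p t j) * ?W (?S - pr m p t j) else (0::'k))"
    have L: "prodw (gU m p) (t # w) ?S = A1 + A2"
      unfolding A1_def A2_def by (rule W_step[OF tV finS])
    have A1: "A1 = (if t \<in> C then gr_sign {t} (C - {t}) * (Qv m p (t # w) C J * ?P (C - {t})) else 0)"
    proof (cases "t \<in> C")
      case True
      have "A1 = gr_sign {t} ((C - {t}) \<union> TJ m p J) * ?W ((C - {t}) \<union> TJ m p J)"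
        unfolding A1_def using True S_mem_t[OF tV] S_minus_t[OF tV] by simp
      also have "gr_sign {t} ((C - {t}) \<union> TJ m p J) = (gr_sign {t} (C - {t}) :: 'k)"
        using tV finC finJ C_TJ_disj[of "C - {t}" m p J] Cons.prems(1)
        by (intro sign_single_TJ) auto
      also have "?W ((C - {t}) \<union> TJ m p J) = Qv m p w (C - {t}) J * ?P (C - {t})"
        using Cons.IH[of "C - {t}" J] Cons.prems by auto
      also have "Qv m p w (C - {t}) J = (Qv m p (t # w) C J :: 'k)" using Q1[OF tV True] .
      finally show ?thesis using True by simp
    next
      case False
      hence "t \<notin> ?S" using S_mem_t[OF tV, of C p J] by blast
      thus ?thesis unfolding A1_def using False by simp
    qed
    have A2: "A2 = Qv m p (t # w) C J * ?P C"
    proof -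
      have "A2 = (\<Sum>j<p-1. if (t, j) \<in> J then Qv m p w C (J - {(t, j)}) * ?P C else 0)"
        unfolding A2_def
      proof (intro sum.cong refl)
        fix j assume "j \<in> {..<p-1}"
        hence j: "j < p - 1" by simp
        show "(if pr m p t j \<subseteq> ?S then gr_sign (pr m p t j) (?S - pr m p t j) * ?W (?S - pr m p t j) else 0) =
              (if (t, j) \<in> J then Qv m p w C (J - {(t, j)}) * ?P C else 0)"
        proof (cases "(t, j) \<in> J")
          case True
          have e: "?S - pr m p t j = C \<union> TJ m p (J - {(t, j)})"
            by (rule S_minus_pr[OF Cons.prems True])
          have sg: "gr_sign (pr m p t j) (?S - pr m p t j) = (1::'k)"
            by (rule sign_pr) (use finS in auto)
          have "?W (C \<union> TJ m p (J - {(t, j)})) = Qv m p w C (J - {(t, j)}) * ?P C"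
            using Cons.IH[of C "J - {(t, j)}"] Cons.prems by auto
          thus ?thesis using True pr_sub_S[OF tV j Cons.prems] e sg by simp
        next
          case False thus ?thesis using pr_sub_S[OF tV j Cons.prems] by simp
        qed
      qed
      also have "\<dots> = Qv m p (t # w) C J * ?P C"
      proof (cases "\<exists>j0. (t, j0) \<in> J")
        case True
        then obtain j0 where j0: "(t, j0) \<in> J" by blast
        have "(\<Sum>j<p-1. if (t, j) \<in> J then Qv m p w C (J - {(t, j)}) * ?P C else 0) =
              (\<Sum>j<p-1. if (t, j) \<in> J then Qv m p w C (J - {(t, j0)}) * ?P C else 0)"
        proof (intro sum.cong refl)
          fix j
          show "(if (t, j) \<in> J then Qv m p w C (J - {(t, j)}) * ?P C else 0) =
                (if (t, j) \<in> J then Qv m p w C (J - {(t, j0)}) * ?P C else 0)"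
          proof (cases "(t, j) \<in> J")
            case True
            have "Qv m p w C (J - {(t, j)}) = (Qv m p w C (J - {(t, j0)}) :: 'k)"
              unfolding Qv_def using kt_remove(1)[OF Cons.prems(2) True] kt_remove(1)[OF Cons.prems(2) j0]
              by simp
            thus ?thesis by simp
          qed simp
        qed
        also have "\<dots> = of_nat (kt J t) * (Qv m p w C (J - {(t, j0)}) * ?P C)"
          by (rule sum_kt[OF Cons.prems(2)])
        also have "\<dots> = Qv m p (t # w) C J * ?P C"
        proof -
          have "of_nat (kt J t) * Qv m p w C (J - {(t, j0)}) = (Qv m p (t # w) C J :: 'k)"
            by (rule Q2[OF tV Cons.prems(2) j0])
          thus ?thesis by (simp add: mult.assoc[symmetric])
        qed
        finally show ?thesis .
      next
        case False
        hence "kt J t = 0" by (simp add: kt_def)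
        have z: "Qv m p (t # w) C J * ?P C = 0"
        proof (rule ccontr)
          assume "Qv m p (t # w) C J * ?P C \<noteq> 0"
          hence "Qv m p (t # w) C J \<noteq> (0::'k)" "?P C \<noteq> 0" by auto
          from Q3[OF tV \<open>kt J t = 0\<close> this(1)] P_supp[OF this(2)] show False by auto
        qed
        show ?thesis unfolding z using False by simp
      qed
      finally show ?thesis .
    qed
    have R: "prodw (gP m) (t # w) C = ?P C + (if t \<in> C then gr_sign {t} (C - {t}) * ?P (C - {t}) else 0)"
      by (rule P_step[OF tV finC])
    show ?thesis unfolding L A1 A2 R by (simp add: algebra_simps)
  qed
qed


definition supp :: "'k::field fa \<Rightarrow> nat list set" where
  "supp f = {w. f w \<noteq> 0}"

definition hom :: "(nat \<Rightarrow> 'k::field gr) \<Rightarrow> 'k fa \<Rightarrow> 'k gr" where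
  "hom g f = (\<lambda>C. \<Sum>w\<in>supp f. f w * prodw g w C)"

lemma FA_finite: "f \<in> FA \<Longrightarrow> finite (supp f)"
  by (simp add: FA_def supp_def)

lemma FA_Nil: "f \<in> FA \<Longrightarrow> f [] = 0"
  by (simp add: FA_def)

lemma hom_super:
  assumes "finite S" "supp f \<subseteq> S"
  shows "hom g f C = (\<Sum>w\<in>S. f w * prodw g w C)"
  unfolding hom_def
  by (rule sum.mono_neutral_left) (use assms in \<open>auto simp: supp_def\<close>)

lemma FA_add: "f \<in> FA \<Longrightarrow> g \<in> FA \<Longrightarrow> fa_add f g \<in> FA"
proof -
  assume "f \<in> FA" "g \<in> FA"
  moreover have "{w. fa_add f g w \<noteq> 0} \<subseteq> {w. f w \<noteq> 0} \<union> {w. g w \<noteq> 0}"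
    by (auto simp: fa_add_def)
  ultimately show ?thesis by (auto simp: FA_def fa_add_def intro: finite_subset)
qed

lemma FA_smult: "f \<in> FA \<Longrightarrow> fa_smult c f \<in> FA"
proof -
  assume "f \<in> FA"
  moreover have "{w. fa_smult c f w \<noteq> 0} \<subseteq> {w. f w \<noteq> 0}"
    by (auto simp: fa_smult_def)
  ultimately show ?thesis by (auto simp: FA_def fa_smult_def intro: finite_subset)
qed

lemma fa_mult_nonzero:
  assumes "fa_mult f g w \<noteq> 0"
  shows "\<exists>n\<le>length w. f (take n w) \<noteq> 0 \<and> g (drop n w) \<noteq> 0"
proof -
  obtain n where "n \<in> {..length w}" "f (take n w) * g (drop n w) \<noteq> 0"
    using assms unfolding fa_mult_def by (meson sum.neutral)
  thus ?thesis by auto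
qed

lemma supp_mult: "supp (fa_mult f g) \<subseteq> (\<lambda>(a, b). a @ b) ` (supp f \<times> supp g)"
proof
  fix w assume "w \<in> supp (fa_mult f g)"
  hence "fa_mult f g w \<noteq> 0" by (simp add: supp_def)
  then obtain n where "f (take n w) \<noteq> 0" "g (drop n w) \<noteq> 0"
    using fa_mult_nonzero by blast
  hence "(take n w, drop n w) \<in> supp f \<times> supp g" by (simp add: supp_def)
  hence "(\<lambda>(a, b). a @ b) (take n w, drop n w) \<in> (\<lambda>(a, b). a @ b) ` (supp f \<times> supp g)" by (rule imageI)
  thus "w \<in> (\<lambda>(a, b). a @ b) ` (supp f \<times> supp g)" by simp
qed

lemma FA_mult: "f \<in> FA \<Longrightarrow> g \<in> FA \<Longrightarrow> fa_mult f g \<in> FA"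
proof -
  assume f: "f \<in> FA" and g: "g \<in> FA"
  have "finite (supp (fa_mult f g))"
    using supp_mult FA_finite[OF f] FA_finite[OF g] finite_subset by blast
  moreover have "fa_mult f g [] = 0" using FA_Nil[OF f] by (simp add: fa_mult_def)
  ultimately show ?thesis by (simp add: FA_def supp_def)
qed

lemma FA_var: "(fa_var i :: 'k::field fa) \<in> FA"
proof -
  have "{w. fa_var i w \<noteq> (0::'k::field)} = {[i]}" by (auto simp: fa_var_def)
  thus ?thesis by (simp add: FA_def fa_var_def)
qed

lemma FA_zero: "(\<lambda>_. 0) \<in> FA" by (simp add: FA_def)

lemma FA_comm: "f \<in> FA \<Longrightarrow> g \<in> FA \<Longrightarrow> fa_comm f g \<in> FA"
  by (simp add: fa_comm_def FA_add FA_smult FA_mult)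

lemma FA_pow: "f \<in> FA \<Longrightarrow> fa_pow f n \<in> FA"
  by (induction f n rule: fa_pow.induct) (auto simp: FA_zero FA_mult)

lemma FA_kappa: "f \<in> FA \<Longrightarrow> g \<in> FA \<Longrightarrow> kappa p f g \<in> FA"
  by (simp add: kappa_def FA_mult FA_comm FA_pow)

lemma FA_w: "w_elt p k \<in> FA"
  by (induction p k rule: w_elt.induct) (auto simp: FA_zero FA_mult FA_kappa FA_var)

lemma hom_add:
  assumes "f \<in> FA" "h \<in> FA"
  shows "hom g (fa_add f h) = hom g f + hom g h"
proof
  fix C
  let ?S = "supp f \<union> supp h"
  have fin: "finite ?S" using FA_finite assms by auto
  have s: "supp (fa_add f h) \<subseteq> ?S" by (auto simp: supp_def fa_add_def)
  show "hom g (fa_add f h) C = (hom g f + hom g h) C"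
    using hom_super[OF fin s] hom_super[OF fin, of f] hom_super[OF fin, of h]
    by (simp add: fa_add_def algebra_simps sum.distrib)
qed

lemma hom_smult:
  assumes "f \<in> FA"
  shows "hom g (fa_smult c f) = sc c (hom g f)"
proof
  fix C
  have fin: "finite (supp f)" using FA_finite assms by auto
  have s: "supp (fa_smult c f) \<subseteq> supp f" by (auto simp: supp_def fa_smult_def)
  show "hom g (fa_smult c f) C = sc c (hom g f) C"
    using hom_super[OF fin s] hom_super[OF fin, of f]
    by (simp add: fa_smult_def sc_def sum_distrib_left algebra_simps)
qed

lemma hom_mult_sum:
  assumes f: "f \<in> FA" and h: "h \<in> FA"
  shows "hom g (fa_mult f h) C = (\<Sum>a\<in>supp f. \<Sum>b\<in>supp h. f a * h b * prodw g (a @ b) C)"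
proof -
  let ?Sf = "supp f" and ?Sh = "supp h"
  let ?S = "(\<lambda>(a, b). a @ b) ` (?Sf \<times> ?Sh)"
  have ff: "finite ?Sf" "finite ?Sh" using FA_finite f h by auto
  hence fS: "finite ?S" by simp
  let ?F = "\<lambda>a b. f a * h b * prodw g (a @ b) C"
  have "hom g (fa_mult f h) C = (\<Sum>w\<in>?S. fa_mult f h w * prodw g w C)"
    by (rule hom_super[OF fS supp_mult])
  also have "\<dots> = (\<Sum>w\<in>?S. \<Sum>n\<in>{..length w}. f (take n w) * h (drop n w) * prodw g w C)"
    by (simp add: fa_mult_def sum_distrib_right)
  also have "\<dots> = (\<Sum>(w, n)\<in>Sigma ?S (\<lambda>w. {..length w}). ?F (take n w) (drop n w))"
    using fS by (subst sum.Sigma) auto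
  also have "\<dots> = (\<Sum>(w, n)\<in>(\<lambda>(a, b). (a @ b, length a)) ` (?Sf \<times> ?Sh). ?F (take n w) (drop n w))"
  proof (rule sum.mono_neutral_right)
    show "finite (Sigma ?S (\<lambda>w. {..length w}))" using fS by auto
    show "(\<lambda>(a, b). (a @ b, length a)) ` (?Sf \<times> ?Sh) \<subseteq> Sigma ?S (\<lambda>w. {..length w})" by auto
    show "\<forall>i\<in>Sigma ?S (\<lambda>w. {..length w}) - (\<lambda>(a, b). (a @ b, length a)) ` (?Sf \<times> ?Sh).
       (case i of (w, n) \<Rightarrow> ?F (take n w) (drop n w)) = 0"
    proof
      fix i assume i: "i \<in> Sigma ?S (\<lambda>w. {..length w}) - (\<lambda>(a, b). (a @ b, length a)) ` (?Sf \<times> ?Sh)"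
      obtain w n where wn: "i = (w, n)" by fastforce
      have nl: "n \<le> length w" using i wn by auto
      have "\<not> (take n w \<in> ?Sf \<and> drop n w \<in> ?Sh)"
      proof
        assume "take n w \<in> ?Sf \<and> drop n w \<in> ?Sh"
        hence "(\<lambda>(a, b). (a @ b, length a)) (take n w, drop n w) \<in> (\<lambda>(a, b). (a @ b, length a)) ` (?Sf \<times> ?Sh)"
          by (intro imageI) simp
        hence "(w, n) \<in> (\<lambda>(a, b). (a @ b, length a)) ` (?Sf \<times> ?Sh)"
          using nl by (simp add: min_def split: if_splits)
        thus False using i wn by auto
      qed
      thus "(case i of (w, n) \<Rightarrow> ?F (take n w) (drop n w)) = 0" using wn by (auto simp: supp_def)
    qed
  qed
  also have "\<dots> = (\<Sum>(a, b)\<in>?Sf \<times> ?Sh. ?F a b)"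
    by (subst sum.reindex) (auto simp: inj_on_def intro!: sum.cong)
  also have "\<dots> = (\<Sum>a\<in>?Sf. \<Sum>b\<in>?Sh. ?F a b)"
    using ff by (simp add: sum.cartesian_product)
  finally show ?thesis .
qed

lemma xm_sum_sc_left: "xm (\<lambda>C. \<Sum>i\<in>I. c i * X i C) Y = (\<lambda>C. \<Sum>i\<in>I. c i * xm (X i) Y C)"
proof -
  have "(\<lambda>C. \<Sum>i\<in>I. c i * X i C) = (\<Sum>i\<in>I. sc (c i) (X i))"
    by (rule ext) (simp add: sum_fun_app sc_def)
  moreover have "(\<lambda>C. \<Sum>i\<in>I. c i * xm (X i) Y C) = (\<Sum>i\<in>I. sc (c i) (xm (X i) Y))"
    by (rule ext) (simp add: sum_fun_app sc_def)
  ultimately show ?thesis by (simp add: xm_sum_left xm_sc_left)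
qed

lemma xm_sum_sc_right: "xm Y (\<lambda>C. \<Sum>i\<in>I. c i * X i C) = (\<lambda>C. \<Sum>i\<in>I. c i * xm Y (X i) C)"
proof -
  have "(\<lambda>C. \<Sum>i\<in>I. c i * X i C) = (\<Sum>i\<in>I. sc (c i) (X i))"
    by (rule ext) (simp add: sum_fun_app sc_def)
  moreover have "(\<lambda>C. \<Sum>i\<in>I. c i * xm Y (X i) C) = (\<Sum>i\<in>I. sc (c i) (xm Y (X i)))"
    by (rule ext) (simp add: sum_fun_app sc_def)
  ultimately show ?thesis by (simp add: xm_sum_right xm_sc_right)
qed

lemma hom_mult:
  assumes f: "f \<in> FA" and h: "h \<in> FA"
  shows "hom g (fa_mult f h) = xm (hom g f) (hom g h)"
proof
  fix C
  have "xm (hom g f) (hom g h) = (\<lambda>C. \<Sum>a\<in>supp f. f a * xm (prodw g a) (hom g h) C)"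
    unfolding hom_def[of g f] by (rule xm_sum_sc_left)
  also have "\<dots> = (\<lambda>C. \<Sum>a\<in>supp f. f a * (\<Sum>b\<in>supp h. h b * xm (prodw g a) (prodw g b) C))"
    unfolding hom_def[of g h] xm_sum_sc_right ..
  finally have "xm (hom g f) (hom g h) C = (\<Sum>a\<in>supp f. \<Sum>b\<in>supp h. f a * h b * prodw g (a @ b) C)"
    by (simp add: prodw_append sum_distrib_left mult.assoc)
  thus "hom g (fa_mult f h) C = xm (hom g f) (hom g h) C"
    using hom_mult_sum[OF f h] by simp
qed

lemma supp_var: "supp (fa_var t :: 'k::field fa) = {[t]}"
  by (auto simp: supp_def fa_var_def)

lemma hom_var: "fz (g t) \<Longrightarrow> hom g (fa_var t) = g t"
  by (rule ext) (simp add: hom_def supp_var[unfolded fa_var_def] fa_var_def xm_one_right)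


definition Ind :: "nat \<Rightarrow> nat \<Rightarrow> nat set" where
  "Ind m p = {1..2*m} \<union> TJ m p (Dom m p)"

lemma finite_Ind: "finite (Ind m p)"
  by (simp add: Ind_def finite_TJ)

lemma gU_supp:
  assumes "gU m p t B \<noteq> (0::'k::field)"
  shows "B \<subseteq> Ind m p \<and> B \<noteq> {}"
proof -
  have tV: "t \<in> {1..2*m}" using assms by (auto simp: gU_def split: if_splits)
  have e: "gU m p t B = (if B = {t} then 1 else 0) + (\<Sum>j<p-1. if B = pr m p t j then 1 else (0::'k))"
    using tV by (simp add: gU_def zt_def xi_def mono_def sum_fun_app)
  have d: "B = {t} \<or> (\<exists>j<p-1. B = pr m p t j)"
  proof (rule ccontr)
    assume "\<not> (B = {t} \<or> (\<exists>j<p-1. B = pr m p t j))"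
    hence "gU m p t B = (0::'k)" unfolding e by simp
    thus False using assms by simp
  qed
  have pI: "pr m p t j \<subseteq> Ind m p" if "j < p - 1" for j
  proof -
    have "(t, j) \<in> Dom m p" using that tV by (simp add: Dom_def)
    thus ?thesis unfolding Ind_def TJ_def by blast
  qed
  show ?thesis
  proof (cases "B = {t}")
    case True thus ?thesis using tV by (auto simp: Ind_def)
  next
    case False
    then obtain j where "j < p - 1" "B = pr m p t j" using d by blast
    thus ?thesis using pI by (auto simp: pr_def)
  qed
qed

lemma prodw_supp:
  "prodw (gU m p) w C \<noteq> (0::'k::field) \<Longrightarrow> C \<subseteq> Ind m p \<and> (w \<noteq> [] \<longrightarrow> C \<noteq> {})"
proof (induction w arbitrary: C)
  case Nil thus ?case by (cases "C = {}") (auto simp: mono_def)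
next
  case (Cons t w)
  have "xm (gU m p t) (prodw (gU m p) w) C \<noteq> (0::'k)" using Cons.prems by (simp only: prodw_Cons not_False_eq_True)
  from xm_nonzero[OF this] obtain B where
    B: "B \<subseteq> C" "gU m p t B \<noteq> (0::'k)" "prodw (gU m p) w (C - B) \<noteq> (0::'k)" by blast
  have "B \<subseteq> Ind m p" "B \<noteq> {}" using gU_supp[OF B(2)] by auto
  moreover have "C - B \<subseteq> Ind m p" using Cons.IH B(3) by blast
  ultimately show ?case using B(1) by auto
qed

lemma hom_gU_supp:
  assumes "f \<in> FA" "hom (gU m p) f C \<noteq> (0::'k::field)"
  shows "C \<subseteq> Ind m p \<and> C \<noteq> {}"
proof -
  obtain w where w: "w \<in> supp f" "f w * prodw (gU m p) w C \<noteq> 0"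
    using assms(2) unfolding hom_def by (meson sum.neutral)
  have "w \<noteq> []" using w(1) FA_Nil[OF assms(1)] by (auto simp: supp_def)
  thus ?thesis using prodw_supp[of m p w C] w(2) by auto
qed

lemma hom_G0: "f \<in> FA \<Longrightarrow> hom (gU m p) f \<in> (G0 :: 'k::field gr set)"
proof -
  assume f: "f \<in> FA"
  have "{A. hom (gU m p) f A \<noteq> (0::'k)} \<subseteq> Pow (Ind m p)" using hom_gU_supp[OF f] by auto
  hence "finite {A. hom (gU m p) f A \<noteq> (0::'k)}" by (rule finite_subset) (simp add: finite_Ind)
  moreover have "\<forall>A. hom (gU m p) f A \<noteq> (0::'k) \<longrightarrow> finite A \<and> A \<noteq> {}"
  proof (intro allI impI)
    fix A assume "hom (gU m p) f A \<noteq> (0::'k)"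
    from hom_gU_supp[OF f this] show "finite A \<and> A \<noteq> {}" using finite_Ind finite_subset by blast
  qed
  ultimately show ?thesis by (simp add: G0_def)
qed

lemma gr_mult_xm:
  assumes "a {} = 0" "b {} = 0"
  shows "gr_mult a b = xm a b"
proof
  fix C show "gr_mult a b C = xm a b C"
  proof (cases "finite C")
    case False thus ?thesis by (simp add: gr_mult_def xm_infinite)
  next
    case True
    have "xm a b C = (\<Sum>A\<in>{A. A \<subseteq> C \<and> A \<noteq> {} \<and> A \<noteq> C}. gr_sign A (C - A) * a A * b (C - A))"
      unfolding xm_def
      by (rule sum.mono_neutral_right) (use True assms in auto)
    thus ?thesis using True by (simp add: gr_mult_def)
  qed
qed

lemma fa_gr_hom_psi: "fa_gr_hom (hom (gU m p) :: 'k::field fa \<Rightarrow> 'k gr)"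
  unfolding fa_gr_hom_def
proof (intro conjI ballI allI)
  fix f :: "'k fa" assume "f \<in> FA" thus "hom (gU m p) f \<in> G0" by (rule hom_G0)
next
  fix f g :: "'k fa" assume "f \<in> FA" "g \<in> FA"
  show "hom (gU m p) (fa_add f g) = gr_add (hom (gU m p) f) (hom (gU m p) g)"
    unfolding hom_add[OF \<open>f \<in> FA\<close> \<open>g \<in> FA\<close>] gr_add_def plus_fun_def ..
next
  fix c :: 'k and f :: "'k fa" assume "f \<in> FA"
  show "hom (gU m p) (fa_smult c f) = gr_smult c (hom (gU m p) f)"
    unfolding hom_smult[OF \<open>f \<in> FA\<close>] gr_smult_def sc_def ..
next
  fix f g :: "'k fa" assume f: "f \<in> FA" and g: "g \<in> FA"
  have "hom (gU m p) f {} = 0" "hom (gU m p) g {} = 0"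
    using hom_gU_supp[OF f, of m p "{}"] hom_gU_supp[OF g, of m p "{}"] by auto
  thus "hom (gU m p) (fa_mult f g) = gr_mult (hom (gU m p) f) (hom (gU m p) g)"
    unfolding hom_mult[OF f g] by (rule gr_mult_xm[symmetric])
qed


definition EE :: "nat \<Rightarrow> nat \<Rightarrow> nat set" where
  "EE m p = {1..2*m} \<union> TJ m p (Dom m p)"

definition lam :: "nat \<Rightarrow> nat \<Rightarrow> 'k::field fa \<Rightarrow> 'k" where
  "lam m p f = hom (gU m p) f (EE m p)"

lemma kt_Dom: "t \<in> {1..2*m} \<Longrightarrow> kt (Dom m p) t = p - 1"
proof -
  assume "t \<in> {1..2*m}"
  hence "{j. (t, j) \<in> Dom m p} = {..<p-1}" by (auto simp: Dom_def)
  thus ?thesis by (simp add: kt_def)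
qed

lemma Lam_eq: "prodw (gU m p) w (EE m p) = Qv m p w {1..2*m} (Dom m p) * (prodw (gP m) w {1..2*m} :: 'k::field)"
  unfolding EE_def by (rule W_formula) auto

lemma Qv_swap: "Qv m p (a @ b) C J = Qv m p (b @ a) C J"
proof -
  have "set (a @ b) = set (b @ a)" by auto
  moreover have "count_list (a @ b) t = count_list (b @ a) t" for t by simp
  ultimately show ?thesis unfolding Qv_def by presburger
qed

lemma Lam_swap:
  assumes pz: "of_nat p = (0::'k::field)" and two: "(2::'k) \<noteq> 0" and p1: "p \<ge> 1"
  shows "prodw (gU m p) (a @ b) (EE m p) = (prodw (gU m p) (b @ a) (EE m p) :: 'k)"
proof -
  have qs: "Qv m p (a @ b) {1..2*m} (Dom m p) = (Qv m p (b @ a) {1..2*m} (Dom m p) :: 'k)" by (rule Qv_swap)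
  show ?thesis
  proof (cases "Qv m p (a @ b) {1..2*m} (Dom m p) = (0::'k)")
  case True
  thus ?thesis unfolding Lam_eq using qs by simp
next
  case False
  hence c: "set (a @ b) \<subseteq> {1..2*m} \<and> (\<forall>t\<in>{1..2*m}. kt (Dom m p) t + (if t \<in> {1..2*m} then 1 else 0) = count_list (a @ b) t)"
    unfolding Qv_def by (meson if_not_P)
  have sa: "set a \<subseteq> {1..2*m}" "set b \<subseteq> {1..2*m}" using c by auto
  have cnt: "\<forall>t\<in>{1..2*m}. count_list a t + count_list b t = p"
    using c kt_Dom p1 by auto
  have "prodw (gP m) (a @ b) {1..2*m} = (prodw (gP m) (b @ a) {1..2*m} :: 'k)"
    unfolding prodw_append using comm_key[OF sa cnt pz two] by simp
  thus ?thesis unfolding Lam_eq using qs by simp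
qed
qed

lemma lam_add: "f \<in> FA \<Longrightarrow> g \<in> FA \<Longrightarrow> lam m p (fa_add f g) = lam m p f + (lam m p g :: 'k::field)"
  by (simp add: lam_def hom_add)

lemma lam_smult: "f \<in> FA \<Longrightarrow> lam m p (fa_smult c f) = c * (lam m p f :: 'k::field)"
  by (simp add: lam_def hom_smult sc_def)

lemma lam_zero: "lam m p (\<lambda>_. 0) = (0::'k::field)"
  by (simp add: lam_def hom_def supp_def)

lemma lam_comm:
  assumes F: "F \<in> FA" and G: "G \<in> FA"
    and pz: "of_nat p = (0::'k::field)" and two: "(2::'k) \<noteq> 0" and p1: "p \<ge> 1"
  shows "lam m p (fa_comm F G) = (0::'k)"
proof -
  have "lam m p (fa_comm F G) = lam m p (fa_mult F G) - lam m p (fa_mult G F)"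
    unfolding fa_comm_def using F G
    by (simp add: lam_add lam_smult FA_mult FA_smult)
  also have "lam m p (fa_mult F G) = (\<Sum>a\<in>supp F. \<Sum>b\<in>supp G. F a * G b * prodw (gU m p) (a @ b) (EE m p))"
    unfolding lam_def by (rule hom_mult_sum[OF F G])
  also have "lam m p (fa_mult G F) = (\<Sum>b\<in>supp G. \<Sum>a\<in>supp F. G b * F a * prodw (gU m p) (b @ a) (EE m p))"
    unfolding lam_def by (rule hom_mult_sum[OF G F])
  also have "\<dots> = (\<Sum>a\<in>supp F. \<Sum>b\<in>supp G. F a * G b * prodw (gU m p) (a @ b) (EE m p))"
    by (subst sum.swap) (simp add: Lam_swap[OF pz two p1] mult.commute)
  finally show ?thesis by simp
qed

lemma endo_id: "fa_endo id" by (simp add: fa_endo_def)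

lemma endo_comp: "fa_endo \<phi> \<Longrightarrow> fa_endo \<psi> \<Longrightarrow> fa_endo (\<phi> \<circ> \<psi>)"
  by (simp add: fa_endo_def)

lemma endo_zero: "fa_endo \<phi> \<Longrightarrow> \<phi> (\<lambda>_. 0) = (\<lambda>_. (0::'k::field))"
proof -
  assume e: "fa_endo \<phi>"
  have "\<phi> (fa_smult 0 (\<lambda>_. (0::'k))) = fa_smult 0 (\<phi> (\<lambda>_. 0))"
    using e FA_zero unfolding fa_endo_def by blast
  moreover have "fa_smult 0 (\<lambda>_. (0::'k)) = (\<lambda>_. 0)" by (simp add: fa_smult_def)
  ultimately show ?thesis by (simp add: fa_smult_def)
qed

lemma endo_comm: "fa_endo \<phi> \<Longrightarrow> f \<in> FA \<Longrightarrow> g \<in> FA \<Longrightarrow> \<phi> (fa_comm f g) = fa_comm (\<phi> f) (\<phi> g)"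
  unfolding fa_comm_def fa_endo_def by (simp add: FA_mult FA_smult)

definition Vl :: "nat \<Rightarrow> nat \<Rightarrow> 'k::field fa set" where
  "Vl m p = {f \<in> FA. \<forall>\<phi>. fa_endo \<phi> \<longrightarrow> lam m p (\<phi> f) = (0::'k)}"

lemma S2_sub:
  assumes pz: "of_nat p = (0::'k::field)" and two: "(2::'k) \<noteq> 0" and p1: "p \<ge> 1"
  shows "(S2 :: 'k fa set) \<subseteq> Vl m p"
proof -
  have sub: "fa_subspace (Vl m p :: 'k fa set)"
    unfolding fa_subspace_def
  proof (intro conjI ballI allI)
    show "Vl m p \<subseteq> FA" by (auto simp: Vl_def)
    show "(\<lambda>_. 0) \<in> (Vl m p :: 'k fa set)" by (simp add: Vl_def FA_zero endo_zero lam_zero)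
  next
    fix f g :: "'k fa" assume f: "f \<in> Vl m p" and g: "g \<in> Vl m p"
    show "fa_add f g \<in> Vl m p" unfolding Vl_def
    proof (intro CollectI conjI allI impI)
      show "fa_add f g \<in> FA" using f g by (simp add: Vl_def FA_add)
      fix \<phi> :: "'k fa \<Rightarrow> 'k fa" assume e: "fa_endo \<phi>"
      have "\<phi> (fa_add f g) = fa_add (\<phi> f) (\<phi> g)" using e f g by (simp add: fa_endo_def Vl_def)
      moreover have "\<phi> f \<in> FA" "\<phi> g \<in> FA" using e f g by (auto simp: fa_endo_def Vl_def)
      ultimately show "lam m p (\<phi> (fa_add f g)) = 0" using e f g by (simp add: lam_add Vl_def)
    qed
  next
    fix c :: 'k and f :: "'k fa" assume f: "f \<in> Vl m p"
    show "fa_smult c f \<in> Vl m p" unfolding Vl_def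
    proof (intro CollectI conjI allI impI)
      show "fa_smult c f \<in> FA" using f by (simp add: Vl_def FA_smult)
      fix \<phi> :: "'k fa \<Rightarrow> 'k fa" assume e: "fa_endo \<phi>"
      have "\<phi> (fa_smult c f) = fa_smult c (\<phi> f)" using e f by (simp add: fa_endo_def Vl_def)
      moreover have "\<phi> f \<in> FA" using e f by (auto simp: fa_endo_def Vl_def)
      ultimately show "lam m p (\<phi> (fa_smult c f)) = 0" using e f by (simp add: lam_smult Vl_def)
    qed
  qed
  have gen: "fa_comm (fa_var 1) (fa_var 2) \<in> (Vl m p :: 'k fa set)"
    unfolding Vl_def
  proof (intro CollectI conjI allI impI)
    show "fa_comm (fa_var 1) (fa_var 2) \<in> (FA :: 'k fa set)" by (simp add: FA_comm FA_var)
    fix \<phi> :: "'k fa \<Rightarrow> 'k fa" assume e: "fa_endo \<phi>"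
    have v: "\<phi> (fa_var 1) \<in> FA" "\<phi> (fa_var 2) \<in> FA" using e FA_var by (auto simp: fa_endo_def)
    show "lam m p (\<phi> (fa_comm (fa_var 1) (fa_var 2))) = 0"
      unfolding endo_comm[OF e FA_var FA_var] by (rule lam_comm[OF v pz two p1])
  qed
  have inv: "\<forall>\<phi>. fa_endo \<phi> \<longrightarrow> \<phi> ` Vl m p \<subseteq> (Vl m p :: 'k fa set)"
  proof (intro allI impI subsetI)
    fix \<phi> :: "'k fa \<Rightarrow> 'k fa" and x assume e: "fa_endo \<phi>" and x: "x \<in> \<phi> ` Vl m p"
    then obtain f where f: "f \<in> Vl m p" "x = \<phi> f" by blast
    show "x \<in> Vl m p" unfolding Vl_def
    proof (intro CollectI conjI allI impI)
      show "x \<in> FA" using e f by (auto simp: fa_endo_def Vl_def)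
      fix \<psi> :: "'k fa \<Rightarrow> 'k fa" assume "fa_endo \<psi>"
      hence "fa_endo (\<psi> \<circ> \<phi>)" using e by (rule endo_comp)
      thus "lam m p (\<psi> x) = 0" using f by (auto simp: Vl_def)
    qed
  qed
  show ?thesis unfolding S2_def using sub gen inv by blast
qed

lemma Vl_zero: "f \<in> Vl m p \<Longrightarrow> lam m p f = (0::'k::field)"
proof -
  assume "f \<in> Vl m p"
  hence "lam m p (id f) = (0::'k)" using endo_id unfolding Vl_def by blast
  thus ?thesis by simp
qed


fun xpow :: "'k::field gr \<Rightarrow> nat \<Rightarrow> 'k gr" where
  "xpow X 0 = 0"
| "xpow X (Suc 0) = X"
| "xpow X (Suc (Suc n)) = xm X (xpow X (Suc n))"

lemma hom_zero: "hom g (\<lambda>_. 0) = (0 :: 'k::field gr)"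
  by (rule ext) (simp add: hom_def supp_def)

lemma hom_pow: "f \<in> FA \<Longrightarrow> hom g (fa_pow f n) = xpow (hom g f) n"
  by (induction f n rule: fa_pow.induct) (auto simp: hom_zero hom_mult FA_pow)

lemma hom_comm: "f \<in> FA \<Longrightarrow> h \<in> FA \<Longrightarrow>
  hom g (fa_comm f h) = xm (hom g f) (hom g h) + sc (-1) (xm (hom g h) (hom g f))"
  by (simp add: fa_comm_def hom_add hom_smult hom_mult FA_mult FA_smult)

lemma hom_kappa: "f \<in> FA \<Longrightarrow> h \<in> FA \<Longrightarrow>
  hom g (kappa p f h) = xm (xm (xm (hom g f) (hom g h) + sc (-1) (xm (hom g h) (hom g f)))
     (xpow (hom g f) (p - 1))) (xpow (hom g h) (p - 1))"
  by (simp add: kappa_def hom_mult hom_comm hom_pow FA_mult FA_comm FA_pow)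

lemma xpow_1x:
  assumes "ods x" "fz x" "(2::'k::field) \<noteq> 0"
  shows "xpow (one_g + x) (Suc n) = one_g + sc (of_nat (Suc n)) (x :: 'k gr)"
proof (induction n)
  case 0 thus ?case by simp
next
  case (Suc n)
  have xx: "xm x x = 0" using ods_sq[OF assms(1,3)] .
  have "xpow (one_g + x) (Suc (Suc n)) = xm (one_g + x) (one_g + sc (of_nat (Suc n)) x)"
    using Suc by (simp only: xpow.simps)
  also have "\<dots> = one_g + sc (of_nat (Suc n)) x + x + sc (of_nat (Suc n)) (xm x x)"
    using assms(2) by (simp add: xm_add_left xm_add_right xm_one_left xm_one_right xm_sc_right add.assoc sc_add)
  also have "\<dots> = one_g + sc (of_nat (Suc (Suc n))) x"
    by (rule ext) (simp add: xx sc_def algebra_simps)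
  finally show ?case .
qed

lemma xm_mono_mono:
  assumes "finite A" "finite B" "\<forall>x\<in>A. \<forall>y\<in>B. x < y"
  shows "xm (mono A) (mono B) = (mono (A \<union> B) :: 'k::field gr)"
proof
  fix C
  show "xm (mono A) (mono B) C = (mono (A \<union> B) C :: 'k)"
  proof (cases "finite C")
    case False
    hence "C \<noteq> A \<union> B" using assms by auto
    thus ?thesis using False by (simp add: xm_infinite mono_def)
  next
    case True
    have s: "gr_sign A B = (1::'k)"
    proof -
      have "inv_set A B = {}" using assms(3) by (fastforce simp: inv_set_def)
      thus ?thesis by (simp add: gr_sign_inv)
    qed
    have d: "A \<inter> B = {}" using assms(3) by auto
    show ?thesis
    proof (cases "C = A \<union> B")
      case True
      have "C - A = B" using True d by auto
      hence "xm (mono A) (mono B) C = gr_sign A B * (mono B B :: 'k)"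
        using True xm_mono_left[OF \<open>finite C\<close>, of A "mono B"] by simp
      moreover have "mono B B = (1::'k)" "mono (A \<union> B) C = (1::'k)" using True by (simp_all add: mono_def)
      ultimately show ?thesis using s by (simp only: mult_1)
    next
      case False
      have "\<not> (A \<subseteq> C \<and> C - A = B)" using False by auto
      have e: "xm (mono A) (mono B) C = (if A \<subseteq> C then gr_sign A (C - A) * mono B (C - A) else (0::'k))"
        by (rule xm_mono_left[OF \<open>finite C\<close>])
      have "xm (mono A) (mono B) C = (0::'k)"
      proof (cases "A \<subseteq> C")
        case True
        hence "C - A \<noteq> B" using \<open>\<not> (A \<subseteq> C \<and> C - A = B)\<close> by blast
        thus ?thesis unfolding e using True by (simp add: mono_def)
      next
        case False thus ?thesis unfolding e by simp
      qed
      thus ?thesis using False by (simp add: mono_def)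
    qed
  qed
qed

lemma Pt_kappa:
  assumes a: "a \<in> {1..2*m}" and b: "b \<in> {1..2*m}" and ab: "a < b" and p2: "p \<ge> 2"
    and two: "(2::'k::field) \<noteq> 0"
  shows "hom (gP m) (kappa p (fa_var a) (fa_var b)) = sc 2 (mono {a, b} :: 'k gr)"
proof -
  let ?a = "xi a :: 'k gr" and ?b = "xi b :: 'k gr"
  have ga0: "gP m a = one_g + ?a" using a unfolding gP_def by (rule if_P)
  have gb0: "gP m b = one_g + ?b" using b unfolding gP_def by (rule if_P)
  have ga: "hom (gP m) (fa_var a) = one_g + ?a" by (subst hom_var) (simp_all add: ga0)
  have gb: "hom (gP m) (fa_var b) = one_g + ?b" by (subst hom_var) (simp_all add: gb0)
  obtain q where q: "p - 1 = Suc q" using p2 by (cases "p - 1") auto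
  have pa: "xpow (one_g + ?a) (p - 1) = one_g + sc (of_nat (p - 1)) ?a"
    unfolding q by (rule xpow_1x) (simp_all add: two)
  have pb: "xpow (one_g + ?b) (p - 1) = one_g + sc (of_nat (p - 1)) ?b"
    unfolding q by (rule xpow_1x) (simp_all add: two)
  let ?D = "xm ?a ?b"
  have ba: "xm ?b ?a = - ?D" by (rule ods_anti) simp_all
  have aa: "xm ?a ?a = 0" by (rule ods_sq) (simp_all add: two)
  have bb: "xm ?b ?b = 0" by (rule ods_sq) (simp_all add: two)
  have c: "xm (one_g + ?a) (one_g + ?b) + sc (-1) (xm (one_g + ?b) (one_g + ?a)) = sc 2 ?D"
    by (rule ext) (simp add: xm_add_left xm_add_right xm_one_left xm_one_right ba sc_def algebra_simps)
  have Da: "xm ?D ?a = 0"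
    by (simp add: xm_assoc ba xm_uminus_right xm_assoc[symmetric] aa)
  have Db: "xm ?D ?b = 0"
    by (simp add: xm_assoc bb)
  have "hom (gP m) (kappa p (fa_var a) (fa_var b)) =
      xm (xm (sc 2 ?D) (one_g + sc (of_nat (p - 1)) ?a)) (one_g + sc (of_nat (p - 1)) ?b)"
    unfolding hom_kappa[OF FA_var FA_var] ga gb c pa pb ..
  also have "\<dots> = sc 2 ?D"
    by (simp add: xm_add_right xm_sc_left xm_sc_right xm_one_right Da Db)
  also have "?D = mono {a, b}"
    unfolding xi_def using xm_mono_mono[of "{a}" "{b}"] ab by (simp add: insert_commute)
  finally show ?thesis .
qed

lemma Pt_w:
  assumes p2: "p \<ge> 2" and two: "(2::'k::field) \<noteq> 0"
  shows "1 \<le> k \<Longrightarrow> k \<le> m \<Longrightarrow> hom (gP m) (w_elt p k) = sc (2 ^ k) (mono {1..2*k} :: 'k gr)"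
proof (induction k)
  case 0 thus ?case by simp
next
  case (Suc k)
  show ?case
  proof (cases k)
    case 0
    have "hom (gP m) (w_elt p (Suc 0)) = sc 2 (mono {1, 2} :: 'k gr)"
      using Suc.prems 0 by (simp add: Pt_kappa p2 two)
    moreover have "{1..2 * Suc 0} = {1, 2::nat}" by auto
    ultimately show ?thesis using 0 by simp
  next
    case (Suc k')
    have IH: "hom (gP m) (w_elt p k) = sc (2 ^ k) (mono {1..2*k} :: 'k gr)"
      using Suc.IH Suc.prems Suc by simp
    have kap: "hom (gP m) (kappa p (fa_var (2 * Suc k - 1)) (fa_var (2 * Suc k))) =
         sc 2 (mono {2 * Suc k - 1, 2 * Suc k} :: 'k gr)"
      using Suc.prems by (intro Pt_kappa p2 two) auto
    have w: "w_elt p (Suc k) = fa_mult (w_elt p k) (kappa p (fa_var (2 * Suc k - 1)) (fa_var (2 * Suc k)))"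
      using Suc by simp
    have mm: "xm (mono {1..2*k}) (mono {2 * Suc k - 1, 2 * Suc k}) = (mono {1..2 * Suc k} :: 'k gr)"
    proof -
      have "{1..2*k} \<union> {2 * Suc k - 1, 2 * Suc k} = {1..2 * Suc k}" by auto
      thus ?thesis using xm_mono_mono[of "{1..2*k}" "{2 * Suc k - 1, 2 * Suc k}"] by auto
    qed
    have "hom (gP m) (w_elt p (Suc k)) = xm (hom (gP m) (w_elt p k)) (hom (gP m) (kappa p (fa_var (2 * Suc k - 1)) (fa_var (2 * Suc k))))"
      unfolding w by (rule hom_mult[OF FA_w FA_kappa[OF FA_var FA_var]])
    also have "\<dots> = sc ((2::'k) ^ k * 2) (xm (mono {1..2*k}) (mono {2 * Suc k - 1, 2 * Suc k}))"
      unfolding IH kap xm_sc_left xm_sc_right sc_sc by (simp only: mult.commute)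
    also have "\<dots> = sc (2 ^ Suc k) (mono {1..2 * Suc k})"
      unfolding mm by (simp add: mult.commute)
    finally show ?thesis .
  qed
qed


definition mh :: "'k::field fa \<Rightarrow> (nat \<Rightarrow> nat) \<Rightarrow> bool" where
  "mh f d \<longleftrightarrow> (\<forall>w. f w \<noteq> 0 \<longrightarrow> (\<forall>t. count_list w t = d t))"

lemma mh_cong: "mh f d \<Longrightarrow> (\<And>s. d s = d' s) \<Longrightarrow> mh f d'"
  by (simp add: mh_def)

lemma mh_var: "mh (fa_var i :: 'k::field fa) (\<lambda>s. if s = i then 1 else 0)"
  by (simp add: mh_def fa_var_def)

lemma mh_zero: "mh (\<lambda>_. 0) d" by (simp add: mh_def)

lemma mh_add: "mh f d \<Longrightarrow> mh g d \<Longrightarrow> mh (fa_add f g) d"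
  unfolding mh_def fa_add_def
proof (rule allI, rule impI)
  fix w assume f: "\<forall>w. f w \<noteq> 0 \<longrightarrow> (\<forall>t. count_list w t = d t)"
    and g: "\<forall>w. g w \<noteq> 0 \<longrightarrow> (\<forall>t. count_list w t = d t)" and w: "f w + g w \<noteq> 0"
  show "\<forall>t. count_list w t = d t"
  proof (cases "f w = 0")
    case True thus ?thesis using g w by simp
  next
    case False thus ?thesis using f by simp
  qed
qed

lemma mh_smult: "mh f d \<Longrightarrow> mh (fa_smult c f) d"
  by (auto simp: mh_def fa_smult_def)

lemma mh_mult: "mh f d1 \<Longrightarrow> mh g d2 \<Longrightarrow> mh (fa_mult f g) (\<lambda>s. d1 s + d2 s)"
  unfolding mh_def
proof (intro allI impI)
  fix w t assume f: "\<forall>w. f w \<noteq> 0 \<longrightarrow> (\<forall>t. count_list w t = d1 t)"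
    and g: "\<forall>w. g w \<noteq> 0 \<longrightarrow> (\<forall>t. count_list w t = d2 t)" and w: "fa_mult f g w \<noteq> 0"
  obtain n where "f (take n w) \<noteq> 0" "g (drop n w) \<noteq> 0" using fa_mult_nonzero[OF w] by blast
  hence "count_list (take n w) t = d1 t" "count_list (drop n w) t = d2 t" using f g by auto
  moreover have "count_list w t = count_list (take n w) t + count_list (drop n w) t"
    by (metis append_take_drop_id count_list_append)
  ultimately show "count_list w t = d1 t + d2 t" by simp
qed

lemma mh_pow: "mh f d \<Longrightarrow> mh (fa_pow f n) (\<lambda>s. n * d s)"
proof (induction f n rule: fa_pow.induct)
  case (1 f) thus ?case by (simp add: mh_zero)
next
  case (2 f) thus ?case by simp
next
  case (3 f n)
  have "mh (fa_mult f (fa_pow f (Suc n))) (\<lambda>s. d s + Suc n * d s)"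
    using 3 by (intro mh_mult) auto
  hence "mh (fa_pow f (Suc (Suc n))) (\<lambda>s. d s + Suc n * d s)" by simp
  thus ?case by (rule mh_cong) simp
qed

lemma mh_comm: "mh f d1 \<Longrightarrow> mh g d2 \<Longrightarrow> mh (fa_comm f g) (\<lambda>s. d1 s + d2 s)"
  unfolding fa_comm_def
  by (intro mh_add mh_smult mh_mult[of _ d1 _ d2] mh_cong[OF mh_mult[of g d2 f d1]]) auto

lemma mh_kappa:
  assumes "mh f d1" "mh g d2" "p \<ge> 1"
  shows "mh (kappa p f g) (\<lambda>s. p * (d1 s + d2 s))"
proof -
  have "mh (kappa p f g) (\<lambda>s. (d1 s + d2 s) + (p - 1) * d1 s + (p - 1) * d2 s)"
    unfolding kappa_def by (intro mh_mult mh_comm mh_pow assms)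
  thus ?thesis
  proof (rule mh_cong)
    fix s
    have "p * (d1 s + d2 s) = (1 + (p - 1)) * (d1 s + d2 s)" using assms(3) by simp
    thus "d1 s + d2 s + (p - 1) * d1 s + (p - 1) * d2 s = p * (d1 s + d2 s)"
      by (simp only: distrib_right distrib_left)
  qed
qed

lemma mh_w:
  assumes "p \<ge> 1"
  shows "k \<ge> 1 \<Longrightarrow> mh (w_elt p k :: 'k::field fa) (\<lambda>s. if 1 \<le> s \<and> s \<le> 2 * k then p else 0)"
proof (induction k)
  case 0 thus ?case by simp
next
  case (Suc k)
  show ?case
  proof (cases k)
    case 0
    have "mh (kappa p (fa_var 1) (fa_var 2) :: 'k fa)
      (\<lambda>s. p * ((if s = 1 then 1 else 0) + (if s = 2 then 1 else 0)))"
      by (intro mh_kappa mh_var assms)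
    hence "mh (w_elt p (Suc 0) :: 'k fa) (\<lambda>s. p * ((if s = 1 then 1 else 0) + (if s = 2 then 1 else 0)))"
      by simp
    hence h: "mh (w_elt p (Suc k) :: 'k fa) (\<lambda>s. p * ((if s = 1 then 1 else 0) + (if s = 2 then 1 else 0)))"
      using 0 by simp
    show ?thesis by (rule mh_cong[OF h]) (use 0 in auto)
  next
    case (Suc k')
    have IH: "mh (w_elt p k :: 'k fa) (\<lambda>s. if 1 \<le> s \<and> s \<le> 2 * k then p else 0)"
      using Suc.IH Suc by simp
    have w: "w_elt p (Suc k) = fa_mult (w_elt p k) (kappa p (fa_var (2 * Suc k - 1)) (fa_var (2 * Suc k)))"
      using Suc by simp
    have "mh (w_elt p (Suc k) :: 'k fa) (\<lambda>s. (if 1 \<le> s \<and> s \<le> 2 * k then p else 0) +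
        p * ((if s = 2 * Suc k - 1 then 1 else 0) + (if s = 2 * Suc k then 1 else 0)))"
      unfolding w by (intro mh_mult IH mh_kappa mh_var assms)
    thus ?thesis by (rule mh_cong) auto
  qed
qed

lemma lam_w:
  assumes p2: "p \<ge> 2" and two: "(2::'k::field) \<noteq> 0" and m1: "m \<ge> 1"
  shows "lam m p (w_elt p m :: 'k fa) = of_nat (\<Prod>t\<in>{1..2*m}. fact (p - 1)) * 2 ^ m"
proof -
  let ?V = "{1..2*m}"
  let ?c = "of_nat (\<Prod>t\<in>?V. fact (p - 1)) :: 'k"
  have mh: "mh (w_elt p m :: 'k fa) (\<lambda>s. if 1 \<le> s \<and> s \<le> 2 * m then p else 0)"
    using mh_w[of p m] p2 m1 by simp
  have Q: "Qv m p w ?V (Dom m p) = ?c" if "w \<in> supp (w_elt p m :: 'k fa)" for w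
  proof -
    have cnt: "\<forall>t. count_list w t = (if 1 \<le> t \<and> t \<le> 2 * m then p else 0)"
      using that mh by (simp add: mh_def supp_def)
    have sw: "set w \<subseteq> ?V"
    proof
      fix t assume "t \<in> set w"
      hence "count_list w t \<noteq> 0" by (simp add: count_list_0_iff)
      thus "t \<in> ?V" using cnt by (auto split: if_splits)
    qed
    have c2: "\<forall>t\<in>?V. kt (Dom m p) t + (if t \<in> ?V then 1 else 0) = count_list w t"
      using cnt kt_Dom p2 by auto
    have pr: "(\<Prod>t\<in>?V. fact (kt (Dom m p) t)) = (\<Prod>t\<in>?V. fact (p - 1) :: nat)"
      by (rule prod.cong[OF refl]) (simp add: kt_Dom)
    have e: "Qv m p w ?V (Dom m p) = (of_nat (\<Prod>t\<in>?V. fact (kt (Dom m p) t)) :: 'k)"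
      unfolding Qv_def by (rule if_P) (use sw c2 in blast)
    show ?thesis unfolding e pr ..
  qed
  have "lam m p (w_elt p m :: 'k fa) = (\<Sum>w\<in>supp (w_elt p m :: 'k fa). w_elt p m w * prodw (gU m p) w (EE m p))"
    by (simp add: lam_def hom_def)
  also have "\<dots> = (\<Sum>w\<in>supp (w_elt p m :: 'k fa). w_elt p m w * (?c * prodw (gP m) w ?V))"
  proof (intro sum.cong refl)
    fix w assume w: "w \<in> supp (w_elt p m :: 'k fa)"
    show "w_elt p m w * prodw (gU m p) w (EE m p) = w_elt p m w * (?c * prodw (gP m) w ?V)"
      unfolding Lam_eq Q[OF w] ..
  qed
  also have "\<dots> = ?c * hom (gP m) (w_elt p m :: 'k fa) ?V"
    by (simp add: hom_def sum_distrib_left algebra_simps)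
  also have "hom (gP m) (w_elt p m :: 'k fa) ?V = (2::'k) ^ m"
    using Pt_w[OF p2 two, of m m] m1 by (simp add: sc_def mono_def)
  finally show ?thesis by simp
qed

theorem corollary2p1:
  fixes p m :: nat
  assumes "prime p" and "p > 2" and "CHAR('k::field) = p" and "m \<ge> 1"
  shows "(w_elt p m :: 'k fa) \<notin> S2_plus_TG0"
proof
  assume "(w_elt p m :: 'k fa) \<in> S2_plus_TG0"
  then obtain a b :: "'k fa" where ab: "w_elt p m = fa_add a b" "a \<in> S2" "b \<in> TG0"
    by (auto simp: S2_plus_TG0_def)
  have pz: "of_nat p = (0::'k)" using assms(3) of_nat_CHAR by metis
  have two: "(2::'k) \<noteq> 0"
  proof
    assume "(2::'k) = 0"
    hence "of_nat 2 = (0::'k)" by simp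
    hence "CHAR('k) dvd 2" by (simp only: of_nat_eq_0_iff_char_dvd)
    hence "p dvd 2" using assms(3) by simp
    thus False using assms(2) by (simp add: nat_dvd_not_less)
  qed
  have p1: "p \<ge> 1" and p2: "p \<ge> 2" using assms(2) by auto
  have aV: "a \<in> Vl m p" using S2_sub[OF pz two p1] ab(2) by blast
  hence la: "lam m p a = (0::'k)" by (rule Vl_zero)
  have aFA: "a \<in> FA" using aV by (simp add: Vl_def)
  have bFA: "b \<in> FA" using ab(3) by (simp add: TG0_def)
  have "hom (gU m p) b = (\<lambda>_. 0 :: 'k)" using ab(3) fa_gr_hom_psi[of m p] unfolding TG0_def by blast
  hence lb: "lam m p b = (0::'k)" by (simp add: lam_def)
  have "lam m p (w_elt p m) = (0::'k)" using ab(1) lam_add[OF aFA bFA] la lb by simp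
  moreover have "lam m p (w_elt p m :: 'k fa) \<noteq> 0"
  proof -
    have nf: "\<not> p dvd fact (p - 1)" using prime_dvd_fact_iff[OF assms(1)] assms(2) by simp
    have nd: "\<not> p dvd (\<Prod>t\<in>{1..2*m}. fact (p - 1))"
      unfolding prime_dvd_prod_iff[OF finite_atLeastAtMost assms(1)] using nf by blast
    have "of_nat (\<Prod>t\<in>{1..2*m}. fact (p - 1)) \<noteq> (0::'k)"
      unfolding of_nat_eq_0_iff_char_dvd assms(3) by (rule nd)
    moreover have "(2::'k) ^ m \<noteq> 0" using two by simp
    ultimately show ?thesis using lam_w[OF p2 two assms(4)] by simp
  qed
  ultimately show False by simp
qed

end
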